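(* For all integers $n\geq 3$ and $k\geq 0$, $$na_{n,k}=(k+1)a_{n-1,k}+(2n-4k)a_{n-1,k-1}+[k(k+2)+n-1]a_{n-2,k}+[(k-1)(4n-8k-14)+2n-8]a_{n-2,k-1}+4(n-2k)(n-2k+1)a_{n-2,k-2},$$ where $a_{m,j}=0$ if $j<0$ or $j>(m-1)/2$.
   Context: For a permutation $\pi=a_1\cdots a_m$ of $\{1,\ldots,m\}$, a descent is an index $1\le i\le m-1$ with $a_i>a_{i+1}$. An involution is a permutation $\pi$ with $\pi^2=\mathrm{id}$. Let $I_{m,j}$ be the number of involutions of $\{1,\ldots,m\}$ with exactly $j$ descents, and $I_m(t)=\sum_{j=0}^{m-1}I_{m,j}t^j$. For $m\geq1$ and $0\leq j\leq \lfloor (m-1)/2\rfloor$ define $$a_{m,j}=\sum_{i=0}^{j}(-1)^{j-i}\frac{m-2i-1}{m-j-i-1}\binom{m-j-i-1}{j-i}I_{m,i}\quad\text{if }2j+1<m,$$ $$a_{m,j}=I_{m,j}+\sum_{i=0}^{j-1}(-1)^{j-i}\frac{m-2i-1}{m-j-i-1}\binom{m-j-i-1}{j-i}I_{m,i}\quad\text{if }2j+1=m.$$ These are the coefficients satisfying $I_m(t)=\sum_{j=0}^{\lfloor (m-1)/2\rfloor}a_{m,j}t^j(1+t)^{m-2j-1}$. *)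

theory Defs
  imports Complex_Main "HOL-Combinatorics.Permutations"
begin

definition descents :: "nat \<Rightarrow> (nat \<Rightarrow> nat) \<Rightarrow> nat set" where
  "descents m p = {i \<in> {1..m-1}. p i > p (Suc i)}"

definition involutions :: "nat \<Rightarrow> (nat \<Rightarrow> nat) set" where
  "involutions m = {p. p permutes {1..m} \<and> p \<circ> p = id}"

definition Inv :: "nat \<Rightarrow> nat \<Rightarrow> nat" where
  "Inv m j = card {p \<in> involutions m. card (descents m p) = j}"

definition term_a :: "nat \<Rightarrow> nat \<Rightarrow> nat \<Rightarrow> rat" where
  "term_a m j i = (-1) ^ (j - i) * (of_nat (m - 2*i - 1) / of_nat (m - j - i - 1))
      * of_nat ((m - j - i - 1) choose (j - i)) * of_nat (Inv m i)"

definition a_nat :: "nat \<Rightarrow> nat \<Rightarrow> rat" where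
  "a_nat m j =
     (if 2*j + 1 < m then (\<Sum>i\<in>{0..j}. term_a m j i)
      else if 2*j + 1 = m then of_nat (Inv m j) + (\<Sum>i\<in>{0..<j}. term_a m j i)
      else 0)"

definition a :: "nat \<Rightarrow> int \<Rightarrow> rat" where
  "a m j = (if j < 0 then 0 else a_nat m (nat j))"

end

theory Submission
  imports Defs "HOL-Library.Product_Lexorder" "HOL-Computational_Algebra.Formal_Power_Series" "HOL-Library.Multiset"
begin

unbundle fps_syntax

definition Pos :: "nat multiset \<Rightarrow> (nat \<times> nat) set" where
  "Pos M = {(u,i). i < count M u}"

definition compatP :: "nat multiset \<Rightarrow> (nat \<times> nat \<Rightarrow> nat \<times> nat) \<Rightarrow> bool" where
  "compatP M p = (\<forall>u i j. i < j \<longrightarrow> j < count M u \<longrightarrow> p (u,i) < p (u,j))"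

definition isinv :: "'a set \<Rightarrow> ('a \<Rightarrow> 'a) \<Rightarrow> bool" where
  "isinv S p = ((\<forall>x. x \<notin> S \<longrightarrow> p x = x) \<and> (\<forall>x\<in>S. p x \<in> S) \<and> (\<forall>x. p (p x) = x))"

definition InvP :: "nat multiset \<Rightarrow> (nat \<times> nat \<Rightarrow> nat \<times> nat) set" where
  "InvP M = {p. isinv (Pos M) p \<and> compatP M p}"

definition KK :: "nat multiset \<Rightarrow> nat" where
  "KK M = card (InvP M)"

definition ZP :: "nat multiset \<Rightarrow> nat \<Rightarrow> nat \<Rightarrow> (nat \<times> nat \<Rightarrow> nat \<times> nat) set" where
  "ZP M v t = {p \<in> InvP M. \<forall>i < count M v. fst (p (v,i)) < t}"

lemma isinv_permutes: "isinv S p \<Longrightarrow> p permutes S"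
  unfolding isinv_def permutes_def by metis

lemma permutes_isinv: "p permutes S \<Longrightarrow> p \<circ> p = id \<Longrightarrow> isinv S p"
  unfolding isinv_def by (auto simp: permutes_not_in permutes_in_image fun_eq_iff)

lemma cnt_mem: "i < count M u \<Longrightarrow> u \<in># M"
  by (metis count_inI less_nat_zero_code)

lemma isinv_remove: "isinv S p \<Longrightarrow> p m = m \<Longrightarrow> isinv (S - {m}) p"
  unfolding isinv_def by (metis Diff_iff singletonD)

lemma isinv_add: "isinv (S - {m}) p \<Longrightarrow> m \<in> S \<Longrightarrow> isinv S p"
proof -
  assume a: "isinv (S - {m}) p" "m \<in> S"
  then have pm: "p m = m" unfolding isinv_def by blast
  show ?thesis unfolding isinv_def
  proof (intro conjI allI ballI impI)
    fix x assume "x \<notin> S" then show "p x = x" using a(1) unfolding isinv_def by blast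
  next
    fix x assume "x \<in> S" then show "p x \<in> S" using a(1) pm unfolding isinv_def by (cases "x = m") auto
  next
    fix x show "p (p x) = x" using a(1) unfolding isinv_def by blast
  qed
qed

lemma finite_Pos: "finite (Pos M)"
proof -
  have "Pos M \<subseteq> set_mset M \<times> {..<size M}"
    using cnt_mem by (auto simp: Pos_def intro: less_le_trans[OF _ count_le_size])
  then show ?thesis by (rule finite_subset) auto
qed

lemma finite_InvP: "finite (InvP M)"
proof -
  have "InvP M \<subseteq> {p. p permutes Pos M}"
    by (auto simp: InvP_def isinv_permutes)
  then show ?thesis using finite_permutations[OF finite_Pos] by (rule finite_subset)
qed

lemma finite_ZP: "finite (ZP M v t)"
  using finite_InvP[of M] unfolding ZP_def by auto

lemma Pos_mem[simp]: "(x \<in> Pos M) = (snd x < count M (fst x))"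
  by (cases x) (auto simp: Pos_def)

lemma R0: "count M v = 0 \<Longrightarrow> ZP M v t = InvP M"
  unfolding ZP_def by auto

lemma pos_max:
  assumes "\<forall>x\<in>#M. x \<le> v" "x \<in> Pos M"
  shows "x \<le> (v, count M v - 1)"
proof -
  obtain b i where x: "x = (b,i)" by (cases x)
  have "b \<in># M" using assms(2) x cnt_mem by auto
  then have "b \<le> v" using assms(1) by auto
  show ?thesis
  proof (cases "b = v")
    case True then show ?thesis using assms(2) x by (auto simp: less_eq_prod_def)
  next
    case False then show ?thesis using \<open>b \<le> v\<close> x by (auto simp: less_eq_prod_def)
  qed
qed

lemma Pos_minus1:
  assumes "v \<in># M"
  shows "Pos (M - {#v#}) = Pos M - {(v, count M v - 1)}"
  using assms by (auto simp: Pos_def split: if_splits dest: cnt_mem)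

lemma lex_less: "((x::nat,i::nat) < (y,j)) = (x < y \<or> x = y \<and> i < j)"
  by (auto simp: less_prod_def)

lemma lex_fst: "(p::nat\<times>nat) < q \<Longrightarrow> fst p \<le> fst q"
  by (cases p; cases q) (auto simp: less_prod_def)

lemma R1:
  assumes A: "\<forall>x\<in>#M. x \<le> v" and V: "v \<in># M"
  shows "KK M = KK (M - {#v#}) + card (ZP M v v)"
proof -
  define m where "m = (v, count M v - 1)"
  have cpos: "count M v > 0" using V by simp
  have mP: "m \<in> Pos M" using cpos by (simp add: m_def)
  have mx: "\<And>x. x \<in> Pos M \<Longrightarrow> x \<le> m" using pos_max[OF A] m_def by auto
  have PM: "Pos (M - {#v#}) = Pos M - {m}" using Pos_minus1[OF V] m_def by simp
  have c1: "{p \<in> InvP M. p m = m} = InvP (M - {#v#})"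
  proof (intro set_eqI iffI)
    fix p assume "p \<in> {p \<in> InvP M. p m = m}"
    then have p: "isinv (Pos M) p" "compatP M p" "p m = m" by (auto simp: InvP_def)
    have "isinv (Pos (M - {#v#})) p"
      using isinv_remove[OF p(1) p(3)] unfolding PM .
    moreover have "compatP (M - {#v#}) p"
      using p(2) unfolding compatP_def by (auto simp: split: if_splits)
    ultimately show "p \<in> InvP (M - {#v#})" by (simp add: InvP_def)
  next
    fix p assume "p \<in> InvP (M - {#v#})"
    then have p: "isinv (Pos M - {m}) p" "compatP (M - {#v#}) p" by (auto simp: InvP_def PM)
    have pm: "p m = m" using p(1) unfolding isinv_def by blast
    have ip: "isinv (Pos M) p" using isinv_add[OF p(1) mP] .
    have "compatP M p"
      unfolding compatP_def
    proof (intro allI impI)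
      fix u i j assume ij: "i < j" "j < count M u"
      show "p (u, i) < p (u, j)"
      proof (cases "(u,j) = m")
        case True
        then have "(u,i) \<in> Pos M - {m}" using ij by (auto simp: m_def)
        then have "p (u,i) \<in> Pos M - {m}" using p(1) unfolding isinv_def by simp
        then have "p (u,i) \<le> m" "p (u,i) \<noteq> m" using mx by auto
        then show ?thesis using True pm by simp
      next
        case False
        then have "j < count (M - {#v#}) u" using ij by (auto simp: m_def)
        then show ?thesis using p(2) ij(1) by (simp add: compatP_def)
      qed
    qed
    then show "p \<in> {p \<in> InvP M. p m = m}" using ip pm by (simp add: InvP_def)
  qed
  have c2: "{p \<in> InvP M. p m \<noteq> m} = ZP M v v"
  proof (intro set_eqI iffI)
    fix p assume "p \<in> {p \<in> InvP M. p m \<noteq> m}"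
    then have p: "isinv (Pos M) p" "compatP M p" "p m \<noteq> m" and pI: "p \<in> InvP M" by (auto simp: InvP_def)
    have pmP: "p m \<in> Pos M" using p(1) mP by (simp add: isinv_def)
    have fm: "fst (p m) < v"
    proof (rule ccontr)
      assume "\<not> fst (p m) < v"
      moreover have "fst (p m) \<le> v" using pmP A cnt_mem by (cases "p m") fastforce
      ultimately have "fst (p m) = v" by simp
      then obtain i where pm: "p m = (v, i)" by (cases "p m") auto
      have "i < count M v" using pmP pm by simp
      then have "i < count M v - 1" using p(3) pm m_def by (cases "i = count M v - 1") auto
      then have "p (v,i) < p (v, count M v - 1)" using p(2) cpos unfolding compatP_def by auto
      moreover have "p (v,i) = m" using pm p(1) unfolding isinv_def by metis
      moreover have "p (v, count M v - 1) = p m" unfolding m_def ..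
      ultimately have "m < p m" by metis
      then show False using mx[OF pmP] by simp
    qed
    have "\<forall>i < count M v. fst (p (v,i)) < v"
    proof (intro allI impI)
      fix i assume i: "i < count M v"
      show "fst (p (v,i)) < v"
      proof (cases "i = count M v - 1")
        case True then show ?thesis using fm m_def by simp
      next
        case False
        then have "p (v,i) < p m" using p(2) i unfolding compatP_def m_def by auto
        then show ?thesis using fm lex_fst by (meson le_less_trans)
      qed
    qed
    then show "p \<in> ZP M v v" using pI by (simp add: ZP_def)
  next
    fix p assume "p \<in> ZP M v v"
    then have "p \<in> InvP M" "fst (p m) < v" using cpos by (auto simp: ZP_def m_def)
    then show "p \<in> {p \<in> InvP M. p m \<noteq> m}" by (auto simp: m_def)
  qed
  have "InvP M = {p \<in> InvP M. p m = m} \<union> {p \<in> InvP M. p m \<noteq> m}" by auto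
  then have "card (InvP M) = card {p \<in> InvP M. p m = m} + card {p \<in> InvP M. p m \<noteq> m}"
    using finite_InvP[of M] by (metis (no_types, lifting) card_Un_disjoint disjoint_iff finite_Un mem_Collect_eq)
  then show ?thesis using c1 c2 by (simp add: KK_def)
qed

lemma isinvD:
  assumes "isinv S p"
  shows "\<And>x. x \<notin> S \<Longrightarrow> p x = x" "\<And>x. x \<in> S \<Longrightarrow> p x \<in> S" "\<And>x. p (p x) = x"
  using assms unfolding isinv_def by auto

lemma isinvI:
  assumes "\<And>x. x \<notin> S \<Longrightarrow> p x = x" "\<And>x. x \<in> S \<Longrightarrow> p x \<in> S" "\<And>x. p (p x) = x"
  shows "isinv S p"
  using assms unfolding isinv_def by auto

lemma Pos_minus2:
  assumes "u \<noteq> v" "u \<in># M" "v \<in># M"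
  shows "Pos (M - {#u#} - {#v#}) = Pos M - {(v, count M v - 1), (u, count M u - 1)}"
  using assms by (auto simp: Pos_def split: if_splits dest: cnt_mem)

lemma R2_piece:
  assumes A: "\<forall>x\<in>#M. x \<le> v" and V: "v \<in># M" and U: "u \<in># M" and ut: "u < t" and tv: "t \<le> v"
  shows "card {p \<in> ZP M v t. p (v, count M v - 1) = (u, count M u - 1)}
       = card (ZP (M - {#u#} - {#v#}) v (Suc u))"
proof -
  define m where "m = (v, count M v - 1)"
  define j where "j = (u, count M u - 1)"
  define M' where "M' = M - {#u#} - {#v#}"
  have uv: "u \<noteq> v" using ut tv by simp
  have cpos: "count M v > 0" using V by simp
  have cupos: "count M u > 0" using U by simp
  have mP: "m \<in> Pos M" using cpos by (simp add: m_def)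
  have jP: "j \<in> Pos M" using cupos by (simp add: j_def)
  have mj: "m \<noteq> j" using uv by (simp add: m_def j_def)
  have mx: "\<And>x. x \<in> Pos M \<Longrightarrow> x \<le> m" using pos_max[OF A] m_def by auto
  have PM: "Pos M' = Pos M - {m, j}" using Pos_minus2[OF uv U V] by (simp add: M'_def m_def j_def)
  have cM': "\<And>w. count M' w = count M w - (if w = u then 1 else 0) - (if w = v then 1 else 0)"
    by (simp add: M'_def)
  define S where "S = {p \<in> ZP M v t. p m = j}"
  define T where "T = ZP M' v (Suc u)"
  define f where "f p = (\<lambda>x. if x = m \<or> x = j then x else p x)" for p :: "nat \<times> nat \<Rightarrow> nat \<times> nat"
  define g where "g q = (\<lambda>x. if x = m then j else if x = j then m else q x)" for q :: "nat \<times> nat \<Rightarrow> nat \<times> nat"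
  have fS: "f p \<in> T" if pS: "p \<in> S" for p
  proof -
    have pI: "isinv (Pos M) p" "compatP M p" "\<forall>i < count M v. fst (p (v,i)) < t" "p m = j"
      using pS by (auto simp: S_def ZP_def InvP_def)
    have pj: "p j = m" using isinvD(3)[OF pI(1), of m] pI(4) by simp
    have nmj: "p x \<noteq> m \<and> p x \<noteq> j" if "x \<noteq> m" "x \<noteq> j" for x
      using that pj pI(4) isinvD(3)[OF pI(1), of x] by metis
    have i1: "isinv (Pos M') (f p)"
    proof (rule isinvI)
      fix x assume "x \<notin> Pos M'"
      then show "f p x = x" using isinvD(1)[OF pI(1), of x] by (auto simp: f_def PM)
    next
      fix x assume x: "x \<in> Pos M'"
      then have "x \<noteq> m" "x \<noteq> j" "x \<in> Pos M" by (auto simp: PM)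
      then show "f p x \<in> Pos M'" using nmj isinvD(2)[OF pI(1), of x] by (simp add: f_def PM)
    next
      fix x show "f p (f p x) = x"
        using nmj[of x] isinvD(3)[OF pI(1), of x] by (auto simp: f_def)
    qed
    have i2: "compatP M' (f p)"
      unfolding compatP_def
    proof (intro allI impI)
      fix w i k assume ik: "i < k" "k < count M' w"
      then have "(w,i) \<in> Pos M'" "(w,k) \<in> Pos M'" by auto
      then have "(w,i) \<noteq> m" "(w,i) \<noteq> j" "(w,k) \<noteq> m" "(w,k) \<noteq> j" by (auto simp: PM)
      moreover have "k < count M w" using ik cM'[of w] by (auto split: if_splits)
      ultimately show "f p (w,i) < f p (w,k)" using pI(2) ik(1) by (simp add: compatP_def f_def)
    qed
    have i3: "\<forall>i < count M' v. fst (f p (v,i)) < Suc u"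
    proof (intro allI impI)
      fix i assume i: "i < count M' v"
      then have ic: "i < count M v - 1" using cM'[of v] uv by simp
      then have "(v,i) \<noteq> m" "(v,i) \<noteq> j" using uv by (auto simp: m_def j_def)
      then have "f p (v,i) = p (v,i)" by (simp add: f_def)
      moreover have "p (v,i) < p m" using pI(2) ic unfolding compatP_def m_def by auto
      ultimately have "f p (v,i) < j" using pI(4) by simp
      then have "fst (f p (v,i)) \<le> u" using lex_fst[of "f p (v,i)" j] by (simp add: j_def)
      then show "fst (f p (v,i)) < Suc u" by simp
    qed
    show ?thesis using i1 i2 i3 by (simp add: T_def ZP_def InvP_def)
  qed
  have gT: "g q \<in> S" if qT: "q \<in> T" for q
  proof -
    have qI: "isinv (Pos M') q" "compatP M' q" "\<forall>i < count M' v. fst (q (v,i)) < Suc u"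
      using qT by (auto simp: T_def ZP_def InvP_def)
    have qm: "q m = m" "q j = j" using isinvD(1)[OF qI(1)] by (auto simp: PM)
    have i1: "isinv (Pos M) (g q)"
    proof (rule isinvI)
      fix x assume x: "x \<notin> Pos M"
      then have "x \<noteq> m" "x \<noteq> j" "x \<notin> Pos M'" using mP jP by (auto simp: PM)
      then show "g q x = x" using isinvD(1)[OF qI(1), of x] by (simp add: g_def)
    next
      fix x assume x: "x \<in> Pos M"
      show "g q x \<in> Pos M"
      proof (cases "x = m \<or> x = j")
        case True then show ?thesis using mP jP by (auto simp: g_def)
      next
        case False
        then have "x \<in> Pos M'" using x by (auto simp: PM)
        then have "q x \<in> Pos M'" using isinvD(2)[OF qI(1)] by blast
        then show ?thesis using False by (auto simp: g_def PM)
      qed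
    next
      fix x show "g q (g q x) = x"
      proof (cases "x = m \<or> x = j")
        case True then show ?thesis using mj by (auto simp: g_def)
      next
        case False
        have "q x \<noteq> m \<and> q x \<noteq> j"
        proof (cases "x \<in> Pos M'")
          case True
          then have "q x \<in> Pos M'" using isinvD(2)[OF qI(1)] by blast
          then show ?thesis by (auto simp: PM)
        next
          case False2: False
          then show ?thesis using isinvD(1)[OF qI(1) False2] False by simp
        qed
        then show ?thesis using False isinvD(3)[OF qI(1), of x] by (auto simp: g_def)
      qed
    qed
    have i2: "compatP M (g q)"
      unfolding compatP_def
    proof (intro allI impI)
      fix w i k assume ik: "i < k" "k < count M w"
      have wi: "(w,i) \<noteq> m" "(w,i) \<noteq> j" using ik by (auto simp: m_def j_def)
      have wiP: "(w,i) \<in> Pos M'" using wi ik by (auto simp: PM)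
      then have qwi: "q (w,i) \<in> Pos M'" using isinvD(2)[OF qI(1)] by blast
      have gwi: "g q (w,i) = q (w,i)" using wi by (simp add: g_def)
      show "g q (w,i) < g q (w,k)"
      proof (cases "(w,k) = m")
        case True
        then have wv: "w = v" and ki: "i < count M' v" using ik uv cM'[of v] by (auto simp: m_def)
        then have "fst (q (v,i)) \<le> u" using qI(3) by auto
        moreover have "q (v,i) \<in> Pos M'" using qwi wv by simp
        ultimately have "q (v,i) < j"
          using cM'[of u] uv by (cases "q (v,i)") (auto simp: j_def lex_less le_less)
        then show ?thesis using True gwi wv by (simp add: g_def)
      next
        case False
        show ?thesis
        proof (cases "(w,k) = j")
          case True
          have "q (w,i) \<in> Pos M" "q (w,i) \<noteq> m" using qwi by (auto simp: PM)
          then have "q (w,i) < m" using mx by (simp add: order.not_eq_order_implies_strict)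
          then show ?thesis using True gwi mj by (simp add: g_def)
        next
          case False2: False
          then have "(w,k) \<in> Pos M'" using False ik by (auto simp: PM)
          then have "q (w,i) < q (w,k)" using qI(2) ik(1) by (simp add: compatP_def)
          then show ?thesis using gwi False False2 by (simp add: g_def)
        qed
      qed
    qed
    have i3: "\<forall>i < count M v. fst (g q (v,i)) < t"
    proof (intro allI impI)
      fix i assume i: "i < count M v"
      show "fst (g q (v,i)) < t"
      proof (cases "i = count M v - 1")
        case True then show ?thesis using ut by (simp add: g_def m_def j_def)
      next
        case False
        then have "(v,i) \<noteq> m" "(v,i) \<noteq> j" "i < count M' v" using uv i cM'[of v] by (auto simp: m_def j_def)
        then show ?thesis using qI(3) ut by (simp add: g_def) (meson less_Suc_eq_le order_le_less_trans)
      qed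
    qed
    have "g q m = j" by (simp add: g_def)
    then show ?thesis using i1 i2 i3 by (simp add: S_def ZP_def InvP_def)
  qed
  have gf: "g (f p) = p" if pS: "p \<in> S" for p
  proof -
    have pI: "isinv (Pos M) p" "p m = j" using pS by (auto simp: S_def ZP_def InvP_def)
    have pj: "p j = m" using isinvD(3)[OF pI(1), of m] pI(2) by simp
    show ?thesis using pI(2) pj mj by (auto simp: fun_eq_iff f_def g_def)
  qed
  have fg: "f (g q) = q" if qT: "q \<in> T" for q
  proof -
    have qI: "isinv (Pos M') q" using qT by (auto simp: T_def ZP_def InvP_def)
    have qm: "q m = m" "q j = j" using isinvD(1)[OF qI] by (auto simp: PM)
    show ?thesis using qm mj by (auto simp: fun_eq_iff f_def g_def)
  qed
  have "bij_betw f S T"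
    by (rule bij_betw_byWitness[where f'=g]) (use gf fg fS gT in auto)
  then have "card S = card T" by (rule bij_betw_same_card)
  then show ?thesis by (simp add: S_def T_def m_def j_def M'_def)
qed

lemma R2:
  assumes A: "\<forall>x\<in>#M. x \<le> v" and V: "v \<in># M" and tv: "t \<le> v"
  shows "card (ZP M v t) = (\<Sum>u\<in>{u. u < t \<and> u \<in># M}. card (ZP (M - {#u#} - {#v#}) v (Suc u)))"
proof -
  define m where "m = (v, count M v - 1)"
  define S where "S u = {p \<in> ZP M v t. p m = (u, count M u - 1)}" for u
  have cpos: "count M v > 0" using V by simp
  have mP: "m \<in> Pos M" using cpos by (simp add: m_def)
  have mx: "\<And>x. x \<in> Pos M \<Longrightarrow> x \<le> m" using pos_max[OF A] m_def by auto
  have cover: "ZP M v t = (\<Union>u\<in>{u. u < t \<and> u \<in># M}. S u)"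
  proof (intro set_eqI iffI)
    fix p assume pZ: "p \<in> ZP M v t"
    then have pI: "isinv (Pos M) p" "compatP M p" "\<forall>i < count M v. fst (p (v,i)) < t"
      by (auto simp: ZP_def InvP_def)
    obtain u k where uk: "p m = (u,k)" by (cases "p m")
    have pmP: "p m \<in> Pos M" using isinvD(2)[OF pI(1) mP] .
    then have kc: "k < count M u" using uk by simp
    then have uM: "u \<in># M" by (rule cnt_mem)
    have ut: "u < t" using pI(3)[rule_format, of "count M v - 1"] cpos uk by (simp add: m_def)
    have kk: "k = count M u - 1"
    proof (rule ccontr)
      assume "k \<noteq> count M u - 1"
      then have "k < count M u - 1" using kc by simp
      then have "p (u,k) < p (u, count M u - 1)" using pI(2) unfolding compatP_def by auto
      moreover have "p (u,k) = m" using isinvD(3)[OF pI(1), of m] uk by simp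
      moreover have "p (u, count M u - 1) \<in> Pos M" using isinvD(2)[OF pI(1)] kc by simp
      ultimately show False using mx by (meson leD)
    qed
    show "p \<in> (\<Union>u\<in>{u. u < t \<and> u \<in># M}. S u)"
      using pZ uk kk ut uM by (auto simp: S_def)
  next
    fix p assume "p \<in> (\<Union>u\<in>{u. u < t \<and> u \<in># M}. S u)"
    then show "p \<in> ZP M v t" by (auto simp: S_def)
  qed
  have fin: "finite {u. u < t \<and> u \<in># M}" by simp
  have finS: "\<forall>u\<in>{u. u < t \<and> u \<in># M}. finite (S u)"
    using finite_ZP[of M v t] by (auto simp: S_def)
  have disj: "\<forall>u\<in>{u. u < t \<and> u \<in># M}. \<forall>w\<in>{u. u < t \<and> u \<in># M}. u \<noteq> w \<longrightarrow> S u \<inter> S w = {}"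
    by (auto simp: S_def)
  have "card (ZP M v t) = (\<Sum>u\<in>{u. u < t \<and> u \<in># M}. card (S u))"
    unfolding cover by (rule card_UN_disjoint[OF fin finS disj])
  also have "\<dots> = (\<Sum>u\<in>{u. u < t \<and> u \<in># M}. card (ZP (M - {#u#} - {#v#}) v (Suc u)))"
    by (rule sum.cong[OF refl]) (use R2_piece[OF A V _ _ tv] in \<open>auto simp: S_def m_def\<close>)
  finally show ?thesis .
qed

lemma KK_empty: "KK {#} = 1"
proof -
  have "InvP {#} = {id}"
    by (auto simp: InvP_def isinv_def compatP_def Pos_def fun_eq_iff)
  then show ?thesis by (simp add: KK_def)
qed

definition MS :: "nat \<Rightarrow> nat \<Rightarrow> nat multiset set" where
  "MS n r = {M. size M = n \<and> (\<forall>x\<in>#M. x < r)}"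

definition TT :: "nat \<Rightarrow> nat \<Rightarrow> nat" where
  "TT n r = (\<Sum>M\<in>MS n r. KK M)"

lemma finite_MS: "finite (MS n r)"
proof -
  have "MS n r \<subseteq> mset ` {xs. set xs \<subseteq> {..<r} \<and> length xs = n}"
  proof
    fix M assume "M \<in> MS n r"
    then have "M = mset (sorted_list_of_multiset M)" "set (sorted_list_of_multiset M) \<subseteq> {..<r}"
      "length (sorted_list_of_multiset M) = n"
      by (auto simp: MS_def) (metis mset_sorted_list_of_multiset size_mset)
    then show "M \<in> mset ` {xs. set xs \<subseteq> {..<r} \<and> length xs = n}" by blast
  qed
  moreover have "finite {xs. set xs \<subseteq> {..<r} \<and> length xs = n}"
    by (rule finite_lists_length_eq) simp
  ultimately show ?thesis by (meson finite_imageI finite_subset)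
qed

lemma TT_0: "TT n 0 = (if n = 0 then 1 else 0)"
proof -
  have "MS n 0 = (if n = 0 then {{#}} else {})"
    by (auto simp: MS_def)
  then show ?thesis by (simp add: TT_def KK_empty)
qed

lemma MS_Suc_decomp:
  "MS n (Suc r) = (\<Union>p\<in>{..n}. (\<lambda>M'. M' + replicate_mset p r) ` MS (n - p) r)"
proof (intro set_eqI iffI)
  fix M assume M: "M \<in> MS n (Suc r)"
  define p where "p = count M r"
  define M' where "M' = filter_mset (\<lambda>x. x < r) M"
  have eq: "M = M' + replicate_mset p r"
  proof (rule multiset_eqI)
    fix x
    show "count M x = count (M' + replicate_mset p r) x"
    proof (cases "x < r")
      case True then show ?thesis by (simp add: M'_def)
    next
      case False
      show ?thesis
      proof (cases "x = r")
        case True then show ?thesis using False by (simp add: M'_def p_def)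
      next
        case False2: False
        then have "x \<notin># M" using M False by (auto simp: MS_def)
        then show ?thesis using False False2 by (simp add: M'_def p_def not_in_iff)
      qed
    qed
  qed
  have "size M = size M' + p" using eq by (metis size_replicate_mset size_union)
  then have "p \<le> n" "size M' = n - p" using M by (auto simp: MS_def)
  moreover have "\<forall>x\<in>#M'. x < r" by (simp add: M'_def)
  ultimately show "M \<in> (\<Union>p\<in>{..n}. (\<lambda>M'. M' + replicate_mset p r) ` MS (n - p) r)"
    using eq by (auto simp: MS_def)
next
  fix M assume "M \<in> (\<Union>p\<in>{..n}. (\<lambda>M'. M' + replicate_mset p r) ` MS (n - p) r)"
  then show "M \<in> MS n (Suc r)" by (fastforce simp: MS_def split: if_splits intro: less_SucI)
qed

lemma TT_Suc_decomp:
  "TT n (Suc r) = (\<Sum>p\<le>n. \<Sum>M'\<in>MS (n - p) r. KK (M' + replicate_mset p r))"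
proof -
  have disj: "\<forall>p\<in>{..n}. \<forall>q\<in>{..n}. p \<noteq> q \<longrightarrow>
      (\<lambda>M'. M' + replicate_mset p r) ` MS (n - p) r \<inter> (\<lambda>M'. M' + replicate_mset q r) ` MS (n - q) r = {}"
  proof (intro ballI impI)
    fix p q :: nat assume "p \<noteq> q"
    { fix M1 M2 assume "M1 \<in> MS (n - p) r" "M2 \<in> MS (n - q) r" "M1 + replicate_mset p r = M2 + replicate_mset q r"
      then have "count (M1 + replicate_mset p r) r = count (M2 + replicate_mset q r) r" by simp
      moreover have "count M1 r = 0" "count M2 r = 0" using \<open>M1 \<in> _\<close> \<open>M2 \<in> _\<close>
        by (auto simp: MS_def count_eq_zero_iff)
      ultimately have False using \<open>p \<noteq> q\<close> by simp }
    then show "(\<lambda>M'. M' + replicate_mset p r) ` MS (n - p) r \<inter> (\<lambda>M'. M' + replicate_mset q r) ` MS (n - q) r = {}"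
      by blast
  qed
  have "TT n (Suc r) = (\<Sum>p\<le>n. \<Sum>M\<in>(\<lambda>M'. M' + replicate_mset p r) ` MS (n - p) r. KK M)"
    unfolding TT_def MS_Suc_decomp
    by (rule sum.UNION_disjoint) (auto simp: finite_MS disj)
  also have "\<dots> = (\<Sum>p\<le>n. \<Sum>M'\<in>MS (n - p) r. KK (M' + replicate_mset p r))"
    by (rule sum.cong[OF refl], rule sum.reindex_cong[where l="\<lambda>M'. M' + replicate_mset _ r"])
       (auto simp: inj_on_def)
  finally show ?thesis .
qed

definition WW :: "nat \<Rightarrow> nat \<Rightarrow> nat \<Rightarrow> nat" where
  "WW r m p = (\<Sum>M'\<in>MS m r. KK (M' + replicate_mset p r))"

definition YY :: "nat \<Rightarrow> nat \<Rightarrow> nat \<Rightarrow> nat \<Rightarrow> nat" where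
  "YY r m q t = (\<Sum>M'\<in>MS m r. card (ZP (M' + replicate_mset q r) r t))"

lemma MS_notin: "M \<in> MS m r \<Longrightarrow> count M r = 0"
  by (auto simp: MS_def count_eq_zero_iff)

lemma WW_0: "WW r m 0 = TT m r"
  by (simp add: WW_def TT_def)

lemma YY_0: "YY r m 0 t = TT m r"
  unfolding YY_def TT_def KK_def
  by (rule sum.cong[OF refl]) (simp add: R0 MS_notin)

lemma WW_Suc: "WW r m (Suc p) = WW r m p + YY r m (Suc p) r"
proof -
  have "KK (M' + replicate_mset (Suc p) r) = KK (M' + replicate_mset p r) + card (ZP (M' + replicate_mset (Suc p) r) r r)"
    if "M' \<in> MS m r" for M'
  proof -
    have A: "\<forall>x\<in>#M' + replicate_mset (Suc p) r. x \<le> r" using that by (auto simp: MS_def less_imp_le)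
    have V: "r \<in># M' + replicate_mset (Suc p) r" by simp
    show ?thesis using R1[OF A V] by simp
  qed
  then show ?thesis by (simp add: WW_def YY_def sum.distrib)
qed

lemma YY_Suc:
  assumes tr: "t \<le> r"
  shows "YY r (Suc m) (Suc q) t = (\<Sum>u<t. YY r m q (Suc u))"
proof -
  have step: "card (ZP (M' + replicate_mset (Suc q) r) r t)
      = (\<Sum>u<t. if u \<in># M' then card (ZP ((M' - {#u#}) + replicate_mset q r) r (Suc u)) else 0)"
    if M': "M' \<in> MS (Suc m) r" for M'
  proof -
    have A: "\<forall>x\<in>#M' + replicate_mset (Suc q) r. x \<le> r" using M' by (auto simp: MS_def less_imp_le)
    have V: "r \<in># M' + replicate_mset (Suc q) r" by simp
    have setq: "{u. u < t \<and> u \<in># M' + replicate_mset (Suc q) r} = {u. u < t \<and> u \<in># M'}"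
      using tr by auto
    have "card (ZP (M' + replicate_mset (Suc q) r) r t)
       = (\<Sum>u\<in>{u. u < t \<and> u \<in># M'}. card (ZP ((M' - {#u#}) + replicate_mset q r) r (Suc u)))"
      unfolding R2[OF A V tr] setq
    proof (rule sum.cong[OF refl])
      fix u assume "u \<in> {u. u < t \<and> u \<in># M'}"
      then have "M' + replicate_mset (Suc q) r - {#u#} - {#r#} = (M' - {#u#}) + replicate_mset q r"
        by (simp add: multiset_eq_iff)
      then show "card (ZP (M' + replicate_mset (Suc q) r - {#u#} - {#r#}) r (Suc u)) = card (ZP (M' - {#u#} + replicate_mset q r) r (Suc u))"
        by simp
    qed
    also have "\<dots> = (\<Sum>u\<in>{..<t}. if u \<in># M' then card (ZP ((M' - {#u#}) + replicate_mset q r) r (Suc u)) else 0)"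
      by (subst sum.inter_filter[symmetric]) (auto intro: sum.cong)
    finally show ?thesis .
  qed
  have "YY r (Suc m) (Suc q) t = (\<Sum>M'\<in>MS (Suc m) r. \<Sum>u<t. if u \<in># M' then card (ZP ((M' - {#u#}) + replicate_mset q r) r (Suc u)) else 0)"
    unfolding YY_def by (rule sum.cong[OF refl]) (rule step)
  also have "\<dots> = (\<Sum>u<t. \<Sum>M'\<in>MS (Suc m) r. if u \<in># M' then card (ZP ((M' - {#u#}) + replicate_mset q r) r (Suc u)) else 0)"
    by (rule sum.swap)
  also have "\<dots> = (\<Sum>u<t. YY r m q (Suc u))"
  proof (rule sum.cong[OF refl])
    fix u assume u: "u \<in> {..<t}"
    have "(\<Sum>M'\<in>MS (Suc m) r. if u \<in># M' then card (ZP ((M' - {#u#}) + replicate_mset q r) r (Suc u)) else 0)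
        = (\<Sum>M'\<in>{M' \<in> MS (Suc m) r. u \<in># M'}. card (ZP ((M' - {#u#}) + replicate_mset q r) r (Suc u)))"
      by (rule sum.inter_filter[symmetric, OF finite_MS])
    also have "\<dots> = (\<Sum>M''\<in>MS m r. card (ZP (M'' + replicate_mset q r) r (Suc u)))"
    proof (rule sum.reindex_bij_witness[where j="\<lambda>M'. M' - {#u#}" and i="add_mset u"])
      fix M'' assume "M'' \<in> MS m r"
      then show "add_mset u M'' - {#u#} = M''" "add_mset u M'' \<in> {M' \<in> MS (Suc m) r. u \<in># M'}"
        using u tr by (auto simp: MS_def)
    next
      fix M' assume M': "M' \<in> {M' \<in> MS (Suc m) r. u \<in># M'}"
      then show "add_mset u (M' - {#u#}) = M'" by simp
      show "M' - {#u#} \<in> MS m r" using M' by (auto simp: MS_def size_Diff_submset dest: in_diffD)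
      show "card (ZP (M' - {#u#} + replicate_mset q r) r (Suc u)) = card (ZP (M' - {#u#} + replicate_mset q r) r (Suc u))" ..
    qed
    finally show "(\<Sum>M'\<in>MS (Suc m) r. if u \<in># M' then card (ZP ((M' - {#u#}) + replicate_mset q r) r (Suc u)) else 0) = YY r m q (Suc u)"
      by (simp add: YY_def)
  qed
  finally show ?thesis .
qed

lemma YY_0m:
  assumes tr: "t \<le> r"
  shows "YY r 0 (Suc q) t = 0"
proof -
  have "MS 0 r = {{#}}" by (auto simp: MS_def)
  moreover have "card (ZP (replicate_mset (Suc q) r) r t) = 0"
  proof -
    have A: "\<forall>x\<in>#replicate_mset (Suc q) r. x \<le> r" by simp
    have V: "r \<in># replicate_mset (Suc q) r" by simp
    have e: "{u. u < t \<and> u \<in># replicate_mset (Suc q) r} = {}" using tr by auto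
    show ?thesis unfolding R2[OF A V tr] e by simp
  qed
  ultimately show ?thesis by (simp add: YY_def)
qed

lemma hockey: "(\<Sum>u<t. (q + u) choose q) = (q + t) choose (Suc q)"
  by (induction t) (simp_all add: add.commute)

lemma YY_closed:
  assumes "t \<le> r"
  shows "YY r m q t = (if q \<le> m then TT (m - q) r * ((q + t - 1) choose q) else 0)"
  using assms
proof (induction q arbitrary: m t)
  case 0 then show ?case by (simp add: YY_0)
next
  case (Suc q)
  show ?case
  proof (cases m)
    case 0 then show ?thesis using YY_0m[OF Suc.prems] by simp
  next
    case (Suc m')
    have "YY r m (Suc q) t = (\<Sum>u<t. YY r m' q (Suc u))" using YY_Suc[OF Suc.prems] Suc by simp
    also have "\<dots> = (\<Sum>u<t. if q \<le> m' then TT (m' - q) r * ((q + u) choose q) else 0)"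
      by (rule sum.cong[OF refl]) (use Suc.IH Suc.prems in auto)
    also have "\<dots> = (if q \<le> m' then TT (m' - q) r * ((q + t) choose (Suc q)) else 0)"
      by (simp add: sum_distrib_left[symmetric] hockey)
    finally show ?thesis using Suc by simp
  qed
qed

lemma WW_sum: "WW r m p = (\<Sum>q\<le>p. YY r m q r)"
  by (induction p) (simp_all add: WW_0 YY_0 WW_Suc)

lemma TT_Suc_WW: "TT n (Suc r) = (\<Sum>p\<le>n. WW r (n - p) p)"
  by (simp add: TT_Suc_decomp WW_def)

lemma TT_rec:
  "TT (Suc n) (Suc r) = TT n (Suc r) + (\<Sum>p\<le>Suc n. YY r (Suc n - p) p r)"
proof -
  have "TT (Suc n) (Suc r) = WW r (Suc n) 0 + (\<Sum>p\<le>n. WW r (n - p) (Suc p))"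
    unfolding TT_Suc_WW by (subst sum.atMost_Suc_shift) simp
  also have "\<dots> = YY r (Suc n) 0 r + (\<Sum>p\<le>n. WW r (n - p) p) + (\<Sum>p\<le>n. YY r (n - p) (Suc p) r)"
    by (simp add: WW_Suc sum.distrib WW_0 YY_0)
  also have "\<dots> = TT n (Suc r) + (YY r (Suc n) 0 r + (\<Sum>p\<le>n. YY r (Suc n - Suc p) (Suc p) r))"
    by (simp add: TT_Suc_WW)
  also have "YY r (Suc n) 0 r + (\<Sum>p\<le>n. YY r (Suc n - Suc p) (Suc p) r) = (\<Sum>p\<le>Suc n. YY r (Suc n - p) p r)"
    by (rule sym, subst sum.atMost_Suc_shift, simp)
  finally show ?thesis .
qed


definition GG :: "nat \<Rightarrow> rat fps" where
  "GG r = Abs_fps (\<lambda>n. of_nat (TT n r))"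

definition Bq :: "nat \<Rightarrow> rat fps" where
  "Bq r = Abs_fps (\<lambda>k. if even k then of_nat ((k div 2 + r - 1) choose (k div 2)) else 0)"

lemma even_sum:
  "(\<Sum>i=0..(N::nat). if even i then f i else (0::'a::comm_monoid_add)) = (\<Sum>p\<le>N div 2. f (2*p))"
proof -
  have "(\<Sum>i=0..N. if even i then f i else 0) = (\<Sum>i\<in>{i\<in>{0..N}. even i}. f i)"
    by (rule sum.inter_filter[symmetric]) simp
  also have "{i\<in>{0..N}. even i} = (\<lambda>p. 2*p) ` {..N div 2}"
    by (auto elim!: evenE)
  also have "(\<Sum>i\<in>(\<lambda>p. 2*p) ` {..N div 2}. f i) = (\<Sum>p\<le>N div 2. f (2*p))"
    by (rule sum.reindex_cong[where l="\<lambda>p. 2*p"]) (auto simp: inj_on_def)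
  finally show ?thesis .
qed

lemma half_sum:
  "(\<Sum>p\<le>(N::nat). if p \<le> N - p then g p else (0::'a::comm_monoid_add)) = (\<Sum>p\<le>N div 2. g p)"
proof -
  have "(\<Sum>p\<le>N. if p \<le> N - p then g p else 0) = (\<Sum>p\<in>{p\<in>{..N}. p \<le> N - p}. g p)"
    by (rule sum.inter_filter[symmetric]) simp
  also have "{p\<in>{..N}. p \<le> N - p} = {..N div 2}" by auto
  finally show ?thesis .
qed

lemma TT_diff:
  "TT N (Suc r) = (if N = 0 then 0 else TT (N - 1) (Suc r)) + (\<Sum>p\<le>N. YY r (N - p) p r)"
proof (cases N)
  case 0
  then show ?thesis by (simp add: TT_Suc_WW WW_0 YY_0)
next
  case (Suc n)
  then show ?thesis using TT_rec by simp
qed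

lemma GG_step: "(1 - fps_X) * GG (Suc r) = GG r * Bq r"
proof (rule fps_ext)
  fix N
  have lhs: "((1 - fps_X) * GG (Suc r)) $ N = of_nat (TT N (Suc r)) - (if N = 0 then 0 else of_nat (TT (N - 1) (Suc r)))"
    by (simp add: algebra_simps GG_def)
  have "(\<Sum>p\<le>N. YY r (N - p) p r) = (\<Sum>p\<le>N. if p \<le> N - p then TT (N - p - p) r * ((p + r - 1) choose p) else 0)"
    by (rule sum.cong[OF refl]) (simp add: YY_closed)
  also have "\<dots> = (\<Sum>p\<le>N div 2. TT (N - p - p) r * ((p + r - 1) choose p))"
    by (rule half_sum)
  finally have y: "(\<Sum>p\<le>N. YY r (N - p) p r) = (\<Sum>p\<le>N div 2. TT (N - p - p) r * ((p + r - 1) choose p))" .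
  have "(GG r * Bq r) $ N = (Bq r * GG r) $ N" by (simp add: mult.commute)
  also have "\<dots> = (\<Sum>i=0..N. if even i then of_nat ((i div 2 + r - 1) choose (i div 2)) * of_nat (TT (N - i) r) else 0)"
    by (auto simp: fps_mult_nth Bq_def GG_def intro!: sum.cong)
  also have "\<dots> = (\<Sum>p\<le>N div 2. of_nat ((p + r - 1) choose p) * of_nat (TT (N - 2*p) r))"
    by (subst even_sum) simp
  also have "\<dots> = (\<Sum>p\<le>N div 2. of_nat (TT (N - p - p) r * ((p + r - 1) choose p)))"
    by (rule sum.cong[OF refl]) (simp add: mult_2)
  also have "\<dots> = of_nat (\<Sum>p\<le>N div 2. TT (N - p - p) r * ((p + r - 1) choose p))"
    by (simp only: of_nat_sum)
  finally have rhs: "(GG r * Bq r) $ N = of_nat (\<Sum>p\<le>N. YY r (N - p) p r)" using y by simp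
  show "((1 - fps_X) * GG (Suc r)) $ N = (GG r * Bq r) $ N"
    unfolding lhs rhs using TT_diff[of N r] by (simp split: if_splits)
qed

lemma mult_1mX2_nth:
  "(F * (1 - fps_X^2)) $ k = F $ k - (if 2 \<le> k then F $ (k - 2) else (0::rat))"
proof -
  have "F * (1 - fps_X^2) = F - fps_X^2 * F" by (simp add: algebra_simps)
  then show ?thesis by (simp add: fps_X_power_mult_nth)
qed

lemma Bq_0: "Bq 0 = 1"
proof (rule fps_ext)
  fix k show "Bq 0 $ k = 1 $ k"
    by (cases "k div 2") (auto simp: Bq_def elim!: evenE)
qed

lemma Bq_Suc: "Bq (Suc r) * (1 - fps_X^2) = Bq r"
proof (rule fps_ext)
  fix k
  show "(Bq (Suc r) * (1 - fps_X^2)) $ k = Bq r $ k"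
  proof (cases "even k")
    case True
    then obtain p where k: "k = 2*p" by (auto elim!: evenE)
    show ?thesis
    proof (cases p)
      case 0 then show ?thesis using k by (simp add: mult_1mX2_nth Bq_def)
    next
      case (Suc p')
      have e: "k - 2 = 2 * p'" using k Suc by simp
      have "(p + r choose p) = (p' + r choose p') + (p' + r choose p)"
        using Suc by simp
      then show ?thesis using k Suc e by (simp add: mult_1mX2_nth Bq_def)
    qed
  next
    case False
    then show ?thesis by (simp add: mult_1mX2_nth Bq_def)
  qed
qed

lemma Bq_inv: "Bq r * (1 - fps_X^2)^r = 1"
proof (induction r)
  case 0 then show ?case by (simp add: Bq_0)
next
  case (Suc r)
  have "Bq (Suc r) * (1 - fps_X^2)^Suc r = (Bq (Suc r) * (1 - fps_X^2)) * (1 - fps_X^2)^r"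
    by (simp add: algebra_simps)
  also have "\<dots> = 1" using Suc by (simp add: Bq_Suc)
  finally show ?case .
qed

fun QQ :: "nat \<Rightarrow> rat fps" where
  "QQ 0 = 1"
| "QQ (Suc r) = (1 - fps_X) * (1 - fps_X^2)^r * QQ r"

lemma GG_0: "GG 0 = 1"
  by (rule fps_ext) (simp add: GG_def TT_0)

lemma GG_QQ: "GG r * QQ r = 1"
proof (induction r)
  case 0 then show ?case by (simp add: GG_0)
next
  case (Suc r)
  have "GG (Suc r) * QQ (Suc r) = ((1 - fps_X) * GG (Suc r)) * ((1 - fps_X^2)^r * QQ r)"
    by (simp add: algebra_simps)
  also have "\<dots> = (GG r * Bq r) * ((1 - fps_X^2)^r * QQ r)"
    by (simp only: GG_step)
  also have "\<dots> = GG r * (Bq r * (1 - fps_X^2)^r) * QQ r"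
    by (simp only: ac_simps)
  also have "\<dots> = 1" using Suc by (simp add: Bq_inv)
  finally show ?case .
qed

lemma QQ_nth0: "QQ r $ 0 = 1"
  by (induction r) (simp_all add: fps_power_zeroth)

lemma dpow: "(1 - fps_X^2) * fps_deriv ((1 - fps_X^2)^r) = - (of_nat (2*r)) * fps_X * ((1 - fps_X^2)^r :: rat fps)"
proof (cases r)
  case 0 then show ?thesis by simp
next
  case (Suc r')
  have d: "fps_deriv (1 - fps_X^2 :: rat fps) = - 2 * fps_X"
    by (simp add: fps_deriv_power')
  have "fps_deriv ((1 - fps_X^2)^r) = of_nat r * fps_deriv (1 - fps_X^2) * ((1 - fps_X^2)^r' :: rat fps)"
    using Suc by (simp only: fps_deriv_power') simp
  then have "(1 - fps_X^2) * fps_deriv ((1 - fps_X^2)^r) = of_nat r * (- 2 * fps_X) * ((1 - fps_X^2) * (1 - fps_X^2)^r' :: rat fps)"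
    unfolding d by (simp only: ac_simps)
  also have "\<dots> = - (of_nat (2*r)) * fps_X * ((1 - fps_X^2)^r :: rat fps)"
    using Suc by (simp only: power_Suc[symmetric]) (simp add: algebra_simps)
  finally show ?thesis .
qed

lemma QQ_ode: "(1 - fps_X^2) * fps_deriv (QQ r) = - (of_nat r + of_nat (r*r) * fps_X) * QQ r"
proof (induction r)
  case 0 then show ?case by simp
next
  case (Suc r)
  define A where "A = ((1 - fps_X^2)^r :: rat fps)"
  define Q where "Q = QQ r"
  define DQ where "DQ = fps_deriv Q"
  define DA where "DA = fps_deriv A"
  have IH: "(1 - fps_X^2) * DQ = - (of_nat r + of_nat (r*r) * fps_X) * Q"
    using Suc by (simp add: DQ_def Q_def)
  have dA: "(1 - fps_X^2) * DA = - (of_nat (2*r)) * fps_X * A"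
    using dpow by (simp add: DA_def A_def)
  have e: "(1 - fps_X^2 :: rat fps) = (1 - fps_X) * (1 + fps_X)"
    by (simp add: algebra_simps power2_eq_square)
  have "(1 - fps_X^2) * fps_deriv (QQ (Suc r))
      = (1 - fps_X) * A * ((1 - fps_X^2) * DQ) + (1 - fps_X) * ((1 - fps_X^2) * DA) * Q - (1 - fps_X^2) * A * Q"
    by (simp add: A_def Q_def DQ_def DA_def algebra_simps)
  also have "\<dots> = (1 - fps_X) * A * (- (of_nat r + of_nat (r*r) * fps_X) * Q)
       + (1 - fps_X) * (- (of_nat (2*r)) * fps_X * A) * Q - ((1 - fps_X) * (1 + fps_X)) * A * Q"
    by (simp only: IH dA, simp only: e)
  also have "\<dots> = - (of_nat (Suc r) + of_nat (Suc r * Suc r) * fps_X) * ((1 - fps_X) * A * Q)"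
    by (simp add: algebra_simps)
  finally show ?case by (simp add: A_def Q_def)
qed

lemma GG_ode: "(1 - fps_X^2) * fps_deriv (GG r) = (of_nat r + of_nat (r*r) * fps_X) * GG r"
proof -
  define c where "c = (of_nat r + of_nat (r*r) * fps_X :: rat fps)"
  have d: "GG r * fps_deriv (QQ r) + fps_deriv (GG r) * QQ r = 0"
    using arg_cong[OF GG_QQ[of r], of fps_deriv] by simp
  have "((1 - fps_X^2) * fps_deriv (GG r) - c * GG r) * QQ r
      = (1 - fps_X^2) * (GG r * fps_deriv (QQ r) + fps_deriv (GG r) * QQ r)
        - GG r * ((1 - fps_X^2) * fps_deriv (QQ r)) - c * GG r * QQ r"
    by (simp add: algebra_simps)
  also have "\<dots> = 0" unfolding d QQ_ode c_def by (simp add: algebra_simps)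
  finally have "((1 - fps_X^2) * fps_deriv (GG r) - c * GG r) * QQ r = 0" .
  moreover have "QQ r \<noteq> 0" using QQ_nth0[of r] by auto
  ultimately show ?thesis by (simp add: c_def)
qed

lemma TT_rec2: "(n+2) * TT (n+2) r = r * TT (n+1) r + (r*r + n) * TT n r"
proof -
  have "((1 - fps_X^2) * fps_deriv (GG r)) $ (n+1) = ((of_nat r + of_nat (r*r) * fps_X) * GG r) $ (n+1)"
    by (simp only: GG_ode)
  moreover have "((1 - fps_X^2) * fps_deriv (GG r)) $ (n+1) = of_nat (n+2) * of_nat (TT (n+2) r) - of_nat n * of_nat (TT n r)"
  proof -
    have "((1 - fps_X^2) * fps_deriv (GG r)) = fps_deriv (GG r) - fps_X^2 * fps_deriv (GG r)"
      by (simp add: algebra_simps)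
    then show ?thesis by (cases n) (simp_all add: fps_X_power_mult_nth GG_def algebra_simps)
  qed
  moreover have "((of_nat r + of_nat (r*r) * fps_X) * GG r) $ (n+1) = of_nat r * of_nat (TT (n+1) r) + of_nat (r*r) * of_nat (TT n r)"
    by (simp add: algebra_simps GG_def fps_of_nat[symmetric])
  ultimately have "of_nat ((n+2) * TT (n+2) r) = (of_nat (r * TT (n+1) r + (r*r + n) * TT n r) :: rat)"
    by (simp add: algebra_simps)
  then show ?thesis by (simp only: of_nat_eq_iff)
qed

definition MonoD :: "nat \<Rightarrow> nat \<Rightarrow> nat set \<Rightarrow> nat list set" where
  "MonoD n r D = {fs. length fs = n \<and> sorted fs \<and> set fs \<subseteq> {..<r} \<and> (\<forall>i\<in>D. fs!(i-1) < fs!i)}"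

lemma hockey2: "e \<le> n \<Longrightarrow> (\<Sum>x<r. (x + e) choose n) = (r + e) choose (Suc n)"
  by (induction r) (simp_all add: add.commute)

lemma finite_MonoD: "finite (MonoD n r D)"
proof -
  have "MonoD n r D \<subseteq> {xs. set xs \<subseteq> {..<r} \<and> length xs = n}" by (auto simp: MonoD_def)
  moreover have "finite {xs. set xs \<subseteq> {..<r} \<and> length xs = n}"
    by (rule finite_lists_length_eq) simp
  ultimately show ?thesis by (rule finite_subset)
qed

lemma MonoD_Suc:
  assumes D: "D \<subseteq> {1..<Suc n}"
  shows "MonoD (Suc n) r D = (\<Union>x\<in>{..<r}. (\<lambda>gs. gs @ [x]) ` MonoD n (if n \<in> D then x else Suc x) (D - {n}))"
proof (intro set_eqI iffI)
  fix fs assume fs: "fs \<in> MonoD (Suc n) r D"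
  then have len: "length fs = Suc n" and so: "sorted fs" and st: "set fs \<subseteq> {..<r}"
    and sd: "\<forall>i\<in>D. fs!(i-1) < fs!i" by (auto simp: MonoD_def)
  define gs where "gs = butlast fs"
  define x where "x = last fs"
  have fsq: "fs = gs @ [x]" using len by (metis append_butlast_last_id gs_def length_0_conv nat.simps(3) x_def)
  have lg: "length gs = n" using len by (simp add: gs_def)
  have xr: "x < r" using st fsq by auto
  have sg: "sorted gs" and gx: "\<forall>y\<in>set gs. y \<le> x" using so fsq by (auto simp: sorted_append)
  have gsx: "set gs \<subseteq> {..<(if n \<in> D then x else Suc x)}"
  proof
    fix y assume y: "y \<in> set gs"
    show "y \<in> {..<(if n \<in> D then x else Suc x)}"
    proof (cases "n \<in> D")
      case True
      then have n1: "n \<ge> 1" using D by auto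
      have "fs!(n-1) < fs!n" using sd True by auto
      then have "gs!(n-1) < x" using fsq lg n1 by (simp add: nth_append)
      moreover obtain j where "j < n" "gs!j = y" using y lg by (metis in_set_conv_nth)
      moreover have "gs!j \<le> gs!(n-1)" using sg \<open>j < n\<close> lg by (simp add: sorted_nth_mono)
      ultimately show ?thesis using True by simp
    next
      case False then show ?thesis using gx y by auto
    qed
  qed
  have gsd: "\<forall>i\<in>D - {n}. gs!(i-1) < gs!i"
  proof
    fix i assume i: "i \<in> D - {n}"
    then have "i < n" "i \<ge> 1" using D by auto
    moreover have "fs!(i-1) < fs!i" using sd i by auto
    moreover have "i - 1 < n" using \<open>i < n\<close> by simp
    ultimately show "gs!(i-1) < gs!i" using fsq lg \<open>i < n\<close> by (simp add: nth_append)
  qed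
  have "gs \<in> MonoD n (if n \<in> D then x else Suc x) (D - {n})"
    using lg sg gsx gsd by (simp add: MonoD_def)
  then show "fs \<in> (\<Union>x\<in>{..<r}. (\<lambda>gs. gs @ [x]) ` MonoD n (if n \<in> D then x else Suc x) (D - {n}))"
    using xr fsq by blast
next
  fix fs assume "fs \<in> (\<Union>x\<in>{..<r}. (\<lambda>gs. gs @ [x]) ` MonoD n (if n \<in> D then x else Suc x) (D - {n}))"
  then obtain x gs where xr: "x < r" and fsq: "fs = gs @ [x]"
    and g: "gs \<in> MonoD n (if n \<in> D then x else Suc x) (D - {n})" by blast
  have lg: "length gs = n" and sg: "sorted gs" and gsx: "set gs \<subseteq> {..<(if n \<in> D then x else Suc x)}"
    and gsd: "\<forall>i\<in>D - {n}. gs!(i-1) < gs!i" using g by (auto simp: MonoD_def)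
  have gx: "\<forall>y\<in>set gs. y \<le> x" using gsx by (auto split: if_splits)
  have "sorted fs" using sg gx fsq by (simp add: sorted_append)
  moreover have "set fs \<subseteq> {..<r}" using gx xr fsq by auto
  moreover have "\<forall>i\<in>D. fs!(i-1) < fs!i"
  proof
    fix i assume i: "i \<in> D"
    show "fs!(i-1) < fs!i"
    proof (cases "i = n")
      case True
      then have n1: "n \<ge> 1" using D i by auto
      then have "gs!(n-1) \<in> set gs" using lg by simp
      then have "gs!(n-1) < x" using gsx True i by auto
      then show ?thesis using True fsq lg n1 by (simp add: nth_append)
    next
      case False
      then have "i < n" "i \<ge> 1" using D i by auto
      then show ?thesis using gsd i False fsq lg by (auto simp: nth_append)
    qed
  qed
  ultimately show "fs \<in> MonoD (Suc n) r D" using lg fsq by (simp add: MonoD_def)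
qed

lemma card_MonoD:
  assumes "D \<subseteq> {1..<n}"
  shows "card (MonoD n r D) = (r + n - 1 - card D) choose n"
  using assms
proof (induction n arbitrary: r D)
  case 0
  then have "D = {}" by auto
  moreover have "MonoD 0 r {} = {[]}" by (auto simp: MonoD_def)
  ultimately show ?case by simp
next
  case (Suc n)
  have fD: "finite D" using Suc.prems finite_subset by blast
  have dn: "card D \<le> n" using card_mono[OF _ Suc.prems] by fastforce
  have "card (MonoD (Suc n) r D) = (\<Sum>x<r. card ((\<lambda>gs. gs @ [x]) ` MonoD n (if n \<in> D then x else Suc x) (D - {n})))"
    unfolding MonoD_Suc[OF Suc.prems]
    by (rule card_UN_disjoint) (auto simp: finite_MonoD)
  also have "\<dots> = (\<Sum>x<r. card (MonoD n (if n \<in> D then x else Suc x) (D - {n})))"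
    by (rule sum.cong[OF refl], rule card_image) (auto simp: inj_on_def)
  also have "\<dots> = (\<Sum>x<r. ((if n \<in> D then x else Suc x) + n - 1 - card (D - {n})) choose n)"
    by (rule sum.cong[OF refl], rule Suc.IH) (use Suc.prems in auto)
  also have "\<dots> = (r + Suc n - 1 - card D) choose (Suc n)"
  proof (cases "n \<in> D")
    case True
    then have n1: "n \<ge> 1" using Suc.prems by auto
    have cd: "card (D - {n}) = card D - 1" using True fD by simp
    have cd1: "card D \<ge> 1" using True fD card_0_eq by fastforce
    have "(\<Sum>x<r. ((if n \<in> D then x else Suc x) + n - 1 - card (D - {n})) choose n)
        = (\<Sum>x<r. (x + (n - card D)) choose n)"
      using True cd cd1 dn by (intro sum.cong) auto
    also have "\<dots> = (r + (n - card D)) choose (Suc n)" by (rule hockey2) simp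
    finally show ?thesis using dn by (simp add: add.commute)
  next
    case False
    have "(\<Sum>x<r. ((if n \<in> D then x else Suc x) + n - 1 - card (D - {n})) choose n)
        = (\<Sum>x<r. (x + (n - card D)) choose n)"
      using False dn by (intro sum.cong) auto
    also have "\<dots> = (r + (n - card D)) choose (Suc n)" by (rule hockey2) simp
    finally show ?thesis using dn by (simp add: add.commute)
  qed
  finally show ?case .
qed

definition cmpG :: "'a::linorder set \<Rightarrow> ('a \<Rightarrow> 'c) \<Rightarrow> ('a \<Rightarrow> 'a) \<Rightarrow> bool" where
  "cmpG S f p = (\<forall>x\<in>S. \<forall>y\<in>S. x < y \<and> f x = f y \<longrightarrow> p x < p y)"

lemma conj_card:
  fixes h :: "'a::linorder \<Rightarrow> 'b::linorder"
  assumes bij: "bij_betw h S P" and mono: "\<And>x y. x \<in> S \<Longrightarrow> y \<in> S \<Longrightarrow> x < y \<Longrightarrow> h x < h y"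
    and lev: "\<And>x. x \<in> S \<Longrightarrow> g (h x) = f x"
  shows "card {p. isinv S p \<and> cmpG S f p} = card {q. isinv P q \<and> cmpG P g q}"
proof -
  define hi where "hi = inv_into S h"
  have hih: "\<And>x. x \<in> S \<Longrightarrow> hi (h x) = x" using bij by (simp add: hi_def bij_betw_inv_into_left)
  have hhi: "\<And>y. y \<in> P \<Longrightarrow> h (hi y) = y" using bij by (simp add: hi_def bij_betw_inv_into_right)
  have hiP: "\<And>y. y \<in> P \<Longrightarrow> hi y \<in> S" using bij by (simp add: hi_def bij_betw_def inv_into_into)
  have hS: "\<And>x. x \<in> S \<Longrightarrow> h x \<in> P" using bij by (auto simp: bij_betw_def)
  have refl: "\<And>x y. x \<in> S \<Longrightarrow> y \<in> S \<Longrightarrow> h x < h y \<Longrightarrow> x < y"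
    using mono by (metis not_less_iff_gr_or_eq order_less_asym)
  have refl2: "\<And>u v. u \<in> P \<Longrightarrow> v \<in> P \<Longrightarrow> u < v \<Longrightarrow> hi u < hi v"
    using refl hhi hiP by metis
  define F where "F p = (\<lambda>y. if y \<in> P then h (p (hi y)) else y)" for p
  define G where "G q = (\<lambda>x. if x \<in> S then hi (q (h x)) else x)" for q
  have F1: "isinv P (F p) \<and> cmpG P g (F p)" if p: "isinv S p" "cmpG S f p" for p
  proof
    show "isinv P (F p)"
    proof (rule isinvI)
      fix x assume "x \<notin> P" then show "F p x = x" by (simp add: F_def)
    next
      fix x assume "x \<in> P" then show "F p x \<in> P" using hS hiP isinvD(2)[OF p(1)] by (simp add: F_def)
    next
      fix x show "F p (F p x) = x"
      proof (cases "x \<in> P")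
        case True
        have "p (hi x) \<in> S" using isinvD(2)[OF p(1)] hiP True by blast
        then show ?thesis using True hS hih hhi isinvD(3)[OF p(1)] by (simp add: F_def)
      next
        case False then show ?thesis by (simp add: F_def)
      qed
    qed
    show "cmpG P g (F p)"
      unfolding cmpG_def
    proof (intro ballI impI)
      fix x y assume xy: "x \<in> P" "y \<in> P" "x < y \<and> g x = g y"
      have "hi x < hi y" using refl2 xy by auto
      moreover have "f (hi x) = f (hi y)" using lev hiP hhi xy by metis
      ultimately have "p (hi x) < p (hi y)" using p(2) hiP xy unfolding cmpG_def by blast
      moreover have "p (hi x) \<in> S" "p (hi y) \<in> S" using isinvD(2)[OF p(1)] hiP xy by auto
      ultimately show "F p x < F p y" using mono xy by (simp add: F_def)
    qed
  qed
  have G1: "isinv S (G q) \<and> cmpG S f (G q)" if q: "isinv P q" "cmpG P g q" for q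
  proof
    show "isinv S (G q)"
    proof (rule isinvI)
      fix x assume "x \<notin> S" then show "G q x = x" by (simp add: G_def)
    next
      fix x assume "x \<in> S" then show "G q x \<in> S" using hS hiP isinvD(2)[OF q(1)] by (simp add: G_def)
    next
      fix x show "G q (G q x) = x"
      proof (cases "x \<in> S")
        case True
        have "q (h x) \<in> P" using isinvD(2)[OF q(1)] hS True by blast
        then show ?thesis using True hiP hih hhi isinvD(3)[OF q(1)] by (simp add: G_def)
      next
        case False then show ?thesis by (simp add: G_def)
      qed
    qed
    show "cmpG S f (G q)"
      unfolding cmpG_def
    proof (intro ballI impI)
      fix x y assume xy: "x \<in> S" "y \<in> S" "x < y \<and> f x = f y"
      have "h x < h y" using mono xy by auto
      moreover have "g (h x) = g (h y)" using lev xy by metis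
      ultimately have "q (h x) < q (h y)" using q(2) hS xy unfolding cmpG_def by blast
      moreover have "q (h x) \<in> P" "q (h y) \<in> P" using isinvD(2)[OF q(1)] hS xy by auto
      ultimately show "G q x < G q y" using refl2 xy by (simp add: G_def)
    qed
  qed
  have GF: "G (F p) = p" if p: "isinv S p" for p
  proof
    fix x show "G (F p) x = p x"
    proof (cases "x \<in> S")
      case True
      have "p x \<in> S" using isinvD(2)[OF p] True .
      then show ?thesis using True hS hih by (simp add: G_def F_def)
    next
      case False then show ?thesis using isinvD(1)[OF p] by (simp add: G_def)
    qed
  qed
  have FG: "F (G q) = q" if q: "isinv P q" for q
  proof
    fix y show "F (G q) y = q y"
    proof (cases "y \<in> P")
      case True
      have "q y \<in> P" using isinvD(2)[OF q] True .
      then show ?thesis using True hiP hhi by (simp add: G_def F_def)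
    next
      case False then show ?thesis using isinvD(1)[OF q] by (simp add: F_def)
    qed
  qed
  have "bij_betw F {p. isinv S p \<and> cmpG S f p} {q. isinv P q \<and> cmpG P g q}"
    by (rule bij_betw_byWitness[where f'=G]) (use F1 G1 GF FG in auto)
  then show ?thesis by (rule bij_betw_same_card)
qed

lemma Pos_add_mset: "Pos (add_mset x M) = insert (x, count M x) (Pos M)"
  by (auto simp: Pos_def less_Suc_eq split: if_splits)

lemma card_Pos: "card (Pos M) = size M"
proof (induction M)
  case empty then show ?case by (simp add: Pos_def)
next
  case (add x M)
  have "(x, count M x) \<notin> Pos M" by simp
  then show ?case using add finite_Pos[of M] by (simp add: Pos_add_mset)
qed

lemma InvP_cmpG: "InvP M = {q. isinv (Pos M) q \<and> cmpG (Pos M) fst q}"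
proof -
  have "compatP M q = cmpG (Pos M) fst q" for q
  proof
    assume c: "compatP M q"
    show "cmpG (Pos M) fst q" unfolding cmpG_def
    proof (intro ballI impI)
      fix x y assume xy: "x \<in> Pos M" "y \<in> Pos M" "x < y \<and> fst x = fst y"
      obtain u i w j where x: "x = (u,i)" and y: "y = (w,j)" by (cases x, cases y)
      have "u = w" "i < j" "j < count M u" using xy x y by (auto simp: lex_less)
      then show "q x < q y" using c x y by (simp add: compatP_def)
    qed
  next
    assume c: "cmpG (Pos M) fst q"
    show "compatP M q" unfolding compatP_def
    proof (intro allI impI)
      fix u i j assume ij: "i < j" "j < count M u"
      then have "(u,i) \<in> Pos M" "(u,j) \<in> Pos M" "(u,i) < (u,j)" by (auto simp: lex_less)
      then show "q (u,i) < q (u,j)" using c unfolding cmpG_def by fastforce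
    qed
  qed
  then show ?thesis by (simp add: InvP_def)
qed

definition hfun :: "nat list \<Rightarrow> nat \<Rightarrow> nat \<times> nat" where
  "hfun fs i = (fs!(i-1), card {j\<in>{1..<i}. fs!(j-1) = fs!(i-1)})"

lemma count_mset_card: "count (mset xs) u = card {j\<in>{1..length xs}. xs!(j-1) = u}"
proof -
  have "count (mset xs) u = card {i. i < length xs \<and> u = xs!i}"
    by (simp add: count_mset count_list_eq_length_filter length_filter_conv_card)
  also have "\<dots> = card (Suc ` {i. i < length xs \<and> u = xs!i})"
    by (simp add: card_image)
  also have "Suc ` {i. i < length xs \<and> u = xs!i} = {j\<in>{1..length xs}. xs!(j-1) = u}"
    by (auto simp: image_iff) (metis Suc_pred' One_nat_def diff_Suc_1 less_eq_Suc_le Suc_le_lessD not_less_eq_eq)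
  finally show ?thesis .
qed

lemma hfun_props:
  assumes so: "sorted fs" and len: "length fs = n"
  shows "\<And>i i'. i \<in> {1..n} \<Longrightarrow> i' \<in> {1..n} \<Longrightarrow> i < i' \<Longrightarrow> hfun fs i < hfun fs i'"
    and "\<And>i. i \<in> {1..n} \<Longrightarrow> hfun fs i \<in> Pos (mset fs)"
    and "bij_betw (hfun fs) {1..n} (Pos (mset fs))"
    and "\<And>i. fst (hfun fs i) = fs!(i-1)"
proof -
  show mono: "hfun fs i < hfun fs i'" if "i \<in> {1..n}" "i' \<in> {1..n}" "i < i'" for i i'
  proof -
    have le: "fs!(i-1) \<le> fs!(i'-1)" using so that len by (simp add: sorted_nth_mono)
    show ?thesis
    proof (cases "fs!(i-1) = fs!(i'-1)")
      case False then show ?thesis using le by (simp add: hfun_def lex_less)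
    next
      case True
      have "{j\<in>{1..<i}. fs!(j-1) = fs!(i-1)} \<subset> {j\<in>{1..<i'}. fs!(j-1) = fs!(i'-1)}"
        using True that by auto
      then have "card {j\<in>{1..<i}. fs!(j-1) = fs!(i-1)} < card {j\<in>{1..<i'}. fs!(j-1) = fs!(i'-1)}"
        by (rule psubset_card_mono[rotated]) simp
      then show ?thesis using True by (simp add: hfun_def lex_less)
    qed
  qed
  show inP: "hfun fs i \<in> Pos (mset fs)" if "i \<in> {1..n}" for i
  proof -
    have "{j\<in>{1..<i}. fs!(j-1) = fs!(i-1)} \<subset> {j\<in>{1..length fs}. fs!(j-1) = fs!(i-1)}"
      using that len by auto
    then have "card {j\<in>{1..<i}. fs!(j-1) = fs!(i-1)} < card {j\<in>{1..length fs}. fs!(j-1) = fs!(i-1)}"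
      by (rule psubset_card_mono[rotated]) simp
    then show ?thesis by (simp add: hfun_def count_mset_card)
  qed
  show "bij_betw (hfun fs) {1..n} (Pos (mset fs))"
  proof -
    have inj: "inj_on (hfun fs) {1..n}"
    proof (rule inj_onI)
      fix x y assume xy: "x \<in> {1..n}" "y \<in> {1..n}" "hfun fs x = hfun fs y"
      show "x = y"
      proof (rule ccontr)
        assume "x \<noteq> y"
        then have "x < y \<or> y < x" by auto
        then show False using mono xy by (metis less_irrefl)
      qed
    qed
    have sub: "hfun fs ` {1..n} \<subseteq> Pos (mset fs)" using inP by auto
    have "card (hfun fs ` {1..n}) = card (Pos (mset fs))"
      using card_image[OF inj] len by (simp add: card_Pos)
    then have "hfun fs ` {1..n} = Pos (mset fs)"
      using sub finite_Pos by (metis card_subset_eq)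
    then show ?thesis using inj by (simp add: bij_betw_def)
  qed
  show "fst (hfun fs i) = fs!(i-1)" for i by (simp add: hfun_def)
qed

lemma chain_less:
  assumes "\<And>i. x \<le> i \<Longrightarrow> i < y \<Longrightarrow> (F::nat\<Rightarrow>nat) i < F (Suc i)" "x < y"
  shows "F x < F y"
  using assms
proof (induction y)
  case 0 then show ?case by simp
next
  case (Suc y)
  show ?case
  proof (cases "x = y")
    case True then show ?thesis using Suc.prems(1)[of y] by simp
  next
    case False
    then have "F x < F y" using Suc by simp
    also have "F y < F (Suc y)" using Suc.prems(1)[of y] Suc.prems(2) False by simp
    finally show ?thesis .
  qed
qed

lemma cmpD_iff:
  assumes so: "sorted fs" and len: "length fs = n" and p: "isinv {1..n} p"
  shows "(\<forall>i\<in>descents n p. fs!(i-1) < fs!i) = cmpG {1..n} (\<lambda>i. fs!(i-1)) p"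
proof
  assume d: "\<forall>i\<in>descents n p. fs!(i-1) < fs!i"
  show "cmpG {1..n} (\<lambda>i. fs!(i-1)) p" unfolding cmpG_def
  proof (intro ballI impI)
    fix x y assume xy: "x \<in> {1..n}" "y \<in> {1..n}" "x < y \<and> fs!(x-1) = fs!(y-1)"
    have step: "p i < p (Suc i)" if i: "x \<le> i" "i < y" for i
    proof -
      have "fs!(x-1) \<le> fs!(i-1)" by (rule sorted_nth_mono[OF so]) (use len xy i in auto)
      moreover have "fs!(i-1) \<le> fs!i" by (rule sorted_nth_mono[OF so]) (use len xy i in auto)
      moreover have "fs!i \<le> fs!(y-1)" by (rule sorted_nth_mono[OF so]) (use len xy i in auto)
      ultimately have "fs!(x-1) \<le> fs!(i-1)" "fs!(i-1) \<le> fs!i" "fs!i \<le> fs!(y-1)" by auto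
      then have eq: "fs!(i-1) = fs!i" using xy by simp
      have "i \<in> {1..n-1}" using xy i by auto
      then have "\<not> p i > p (Suc i)" using d eq by (auto simp: descents_def)
      moreover have "p i \<noteq> p (Suc i)" using isinvD(3)[OF p] by (metis n_not_Suc_n)
      ultimately show ?thesis by simp
    qed
    show "p x < p y" using chain_less[of x y p] step xy by blast
  qed
next
  assume c: "cmpG {1..n} (\<lambda>i. fs!(i-1)) p"
  show "\<forall>i\<in>descents n p. fs!(i-1) < fs!i"
  proof
    fix i assume i: "i \<in> descents n p"
    then have i1: "i \<in> {1..n-1}" and gt: "p i > p (Suc i)" by (auto simp: descents_def)
    have le: "fs!(i-1) \<le> fs!i" using so len i1 by (auto intro: sorted_nth_mono)
    show "fs!(i-1) < fs!i"
    proof (rule ccontr)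
      assume "\<not> fs!(i-1) < fs!i"
      then have "fs!(i-1) = fs!(Suc i - 1)" using le by simp
      then have "p i < p (Suc i)" using c i1 unfolding cmpG_def by auto
      then show False using gt by simp
    qed
  qed
qed

lemma involutions_isinv: "involutions n = {p. isinv {1..n} p}"
proof (intro set_eqI iffI)
  fix p assume "p \<in> involutions n"
  then show "p \<in> {p. isinv {1..n} p}" by (auto simp: involutions_def intro: permutes_isinv)
next
  fix p assume "p \<in> {p. isinv {1..n} p}"
  then have "isinv {1..n} p" by simp
  then show "p \<in> involutions n"
    using isinv_permutes isinvD(3) by (fastforce simp: involutions_def)
qed

lemma BK:
  assumes fs: "fs \<in> MonoD n r {}"
  shows "card {p \<in> involutions n. \<forall>i\<in>descents n p. fs!(i-1) < fs!i} = KK (mset fs)"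
proof -
  have so: "sorted fs" and len: "length fs = n" using fs by (auto simp: MonoD_def)
  have "{p \<in> involutions n. \<forall>i\<in>descents n p. fs!(i-1) < fs!i} = {p. isinv {1..n} p \<and> cmpG {1..n} (\<lambda>i. fs!(i-1)) p}"
    using cmpD_iff[OF so len] by (auto simp: involutions_isinv)
  also have "card \<dots> = card {q. isinv (Pos (mset fs)) q \<and> cmpG (Pos (mset fs)) fst q}"
    by (rule conj_card[OF hfun_props(3)[OF so len] hfun_props(1)[OF so len]]) (simp_all add: hfun_props(4)[OF so len])
  also have "\<dots> = KK (mset fs)" by (simp add: KK_def InvP_cmpG)
  finally show ?thesis .
qed

lemma sum_card_swap:
  assumes "finite A" "finite B"
  shows "(\<Sum>x\<in>A. card {y\<in>B. P x y}) = (\<Sum>y\<in>B. card {x\<in>A. P x y})"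
proof -
  have "(\<Sum>x\<in>A. card {y\<in>B. P x y}) = (\<Sum>x\<in>A. \<Sum>y\<in>B. if P x y then 1 else 0)"
    using assms by (simp add: sum.inter_filter[symmetric])
  also have "\<dots> = (\<Sum>y\<in>B. \<Sum>x\<in>A. if P x y then 1 else 0)" by (rule sum.swap)
  also have "\<dots> = (\<Sum>y\<in>B. card {x\<in>A. P x y})"
    using assms by (simp add: sum.inter_filter[symmetric])
  finally show ?thesis .
qed

lemma finite_involutions: "finite (involutions n)"
proof -
  have "involutions n \<subseteq> {p. p permutes {1..n}}" by (auto simp: involutions_def)
  then show ?thesis using finite_permutations[of "{1..n}"] by (simp add: finite_subset)
qed

lemma descents_sub: "descents n p \<subseteq> {1..<n}"
  by (auto simp: descents_def)

lemma card_descents: "card (descents n p) \<le> n"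
proof -
  have "card (descents n p) \<le> card {1..<n}" by (rule card_mono[OF _ descents_sub]) simp
  then show ?thesis by simp
qed

lemma MonoD_filter: "MonoD n r (descents n p) = {fs \<in> MonoD n r {}. \<forall>i\<in>descents n p. fs!(i-1) < fs!i}"
  by (auto simp: MonoD_def)

lemma mset_bij: "bij_betw mset (MonoD n r {}) (MS n r)"
proof (rule bij_betw_byWitness[where f'=sorted_list_of_multiset])
  show "\<forall>a\<in>MonoD n r {}. sorted_list_of_multiset (mset a) = a"
    by (auto simp: MonoD_def sorted_sort_id)
  show "\<forall>a'\<in>MS n r. mset (sorted_list_of_multiset a') = a'" by simp
  show "mset ` MonoD n r {} \<subseteq> MS n r" by (auto simp: MonoD_def MS_def)
  show "sorted_list_of_multiset ` MS n r \<subseteq> MonoD n r {}"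
    by (auto simp: MonoD_def MS_def) (metis mset_sorted_list_of_multiset size_mset)
qed

lemma bridge: "TT n r = (\<Sum>k\<le>n. Inv n k * ((r + n - 1 - k) choose n))"
proof -
  have "TT n r = (\<Sum>fs\<in>MonoD n r {}. KK (mset fs))"
    unfolding TT_def by (rule sum.reindex_bij_betw[OF mset_bij, symmetric])
  also have "\<dots> = (\<Sum>fs\<in>MonoD n r {}. card {p \<in> involutions n. \<forall>i\<in>descents n p. fs!(i-1) < fs!i})"
    by (rule sum.cong[OF refl]) (rule BK[symmetric])
  also have "\<dots> = (\<Sum>p\<in>involutions n. card {fs \<in> MonoD n r {}. \<forall>i\<in>descents n p. fs!(i-1) < fs!i})"
    by (rule sum_card_swap[OF finite_MonoD finite_involutions])
  also have "\<dots> = (\<Sum>p\<in>involutions n. (r + n - 1 - card (descents n p)) choose n)"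
    by (rule sum.cong[OF refl]) (simp only: MonoD_filter[symmetric] card_MonoD[OF descents_sub])
  also have "\<dots> = (\<Sum>k\<in>{..n}. \<Sum>p\<in>{p \<in> involutions n. card (descents n p) = k}. (r + n - 1 - card (descents n p)) choose n)"
    by (rule sum.group[symmetric]) (auto simp: finite_involutions card_descents)
  also have "\<dots> = (\<Sum>k\<le>n. Inv n k * ((r + n - 1 - k) choose n))"
    by (rule sum.cong[OF refl]) (simp add: Inv_def)
  finally show ?thesis .
qed


definition Ipoly :: "nat \<Rightarrow> rat fps" where
  "Ipoly n = Abs_fps (\<lambda>k. of_nat (Inv n k))"

definition Phi :: "nat \<Rightarrow> rat fps" where
  "Phi n = Abs_fps (\<lambda>r. of_nat (TT n (Suc r)))"

definition Cn :: "nat \<Rightarrow> rat fps" where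
  "Cn n = Abs_fps (\<lambda>r. of_nat ((r + n) choose n))"

definition EE :: "rat fps \<Rightarrow> rat fps" where
  "EE F = Abs_fps (\<lambda>r. of_nat (Suc r) * F $ r)"

definition UU :: "nat \<Rightarrow> rat fps \<Rightarrow> rat fps" where
  "UU m G = (1 - fps_X) * (G + fps_X * fps_deriv G) + of_nat m * fps_X * G"

lemma Inv_big: "n < k \<Longrightarrow> Inv n k = 0"
proof -
  assume nk: "n < k"
  have e: "{p \<in> involutions n. card (descents n p) = k} = {}"
    using card_descents[of n] nk by (metis (mono_tags, lifting) empty_Collect_eq leD)
  show ?thesis by (simp only: Inv_def e card.empty)
qed

lemma Phi_eq: "Phi n = Ipoly n * Cn n"
proof (rule fps_ext)
  fix r
  have "TT n (Suc r) = (\<Sum>k\<le>n. Inv n k * ((r + n - k) choose n))"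
    using bridge[of n "Suc r"] by simp
  also have "\<dots> = (\<Sum>k\<le>n + r. Inv n k * ((r + n - k) choose n))"
    by (rule sum.mono_neutral_left) (auto simp: Inv_big)
  also have "\<dots> = (\<Sum>k\<le>r. Inv n k * ((r + n - k) choose n))"
    by (rule sum.mono_neutral_right) auto
  finally have t: "TT n (Suc r) = (\<Sum>k\<le>r. Inv n k * ((r + n - k) choose n))" .
  have "(Ipoly n * Cn n) $ r = (\<Sum>i=0..r. of_nat (Inv n i) * of_nat ((r - i + n) choose n))"
    by (simp add: fps_mult_nth Ipoly_def Cn_def)
  also have "\<dots> = of_nat (\<Sum>k\<le>r. Inv n k * ((r + n - k) choose n))"
    by (simp add: of_nat_sum atLeast0AtMost)
  finally show "Phi n $ r = (Ipoly n * Cn n) $ r" using t by (simp add: Phi_def)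
qed

lemma mult_1mX_nth: "((F::rat fps) * (1 - fps_X)) $ k = F $ k - (if k = 0 then 0 else F $ (k - 1 :: nat))"
proof -
  have "F * (1 - fps_X) = F - fps_X * F" by (simp add: algebra_simps)
  then show ?thesis by simp
qed

lemma Cn_step: "Cn (Suc n) * (1 - fps_X) = Cn n"
proof (rule fps_ext)
  fix r
  show "(Cn (Suc n) * (1 - fps_X)) $ r = Cn n $ r"
  proof (cases r)
    case 0 then show ?thesis by (simp add: mult_1mX_nth Cn_def)
  next
    case (Suc r')
    have "(r + Suc n) choose (Suc n) = (r + n choose n) + (r' + Suc n choose Suc n)"
      using Suc by simp
    then show ?thesis using Suc by (simp add: mult_1mX_nth Cn_def)
  qed
qed

lemma Cn_inv: "Cn n * (1 - fps_X)^(Suc n) = 1"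
proof (induction n)
  case 0
  have "Cn 0 * (1 - fps_X) = 1"
    by (rule fps_ext) (simp add: mult_1mX_nth Cn_def)
  then show ?case by simp
next
  case (Suc n)
  have "Cn (Suc n) * (1 - fps_X)^(Suc (Suc n)) = (Cn (Suc n) * (1 - fps_X)) * (1 - fps_X)^(Suc n)"
    by (simp only: power_Suc ac_simps)
  also have "\<dots> = Cn n * (1 - fps_X)^(Suc n)" by (simp only: Cn_step)
  also have "\<dots> = 1" by (rule Suc.IH)
  finally show ?case .
qed

lemma Phi_Ipoly: "Phi n * (1 - fps_X)^(Suc n) = Ipoly n"
proof -
  have "Phi n * (1 - fps_X)^(Suc n) = Ipoly n * (Cn n * (1 - fps_X)^(Suc n))"
    by (simp add: Phi_eq ac_simps)
  then show ?thesis by (simp only: Cn_inv mult_1_right)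
qed

lemma Phi_rec: "of_nat (m+2) * Phi (m+2) = EE (Phi (m+1)) + EE (EE (Phi m)) + of_nat m * Phi m"
proof (rule fps_ext)
  fix r
  have "(m+2) * TT (m+2) (Suc r) = Suc r * TT (m+1) (Suc r) + (Suc r * Suc r + m) * TT m (Suc r)"
    by (rule TT_rec2)
  then have "of_nat ((m+2) * TT (m+2) (Suc r)) = (of_nat (Suc r * TT (m+1) (Suc r) + (Suc r * Suc r + m) * TT m (Suc r)) :: rat)"
    by (simp only:)
  then show "(of_nat (m+2) * Phi (m+2)) $ r = (EE (Phi (m+1)) + EE (EE (Phi m)) + of_nat m * Phi m) $ r"
    by (simp add: Phi_def EE_def fps_of_nat[symmetric] algebra_simps)
qed

lemma EE_alt: "EE F = F + fps_X * fps_deriv F"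
  by (rule fps_ext) (auto simp: EE_def algebra_simps)

lemma EU: "EE F * (1 - fps_X)^(Suc m) = UU m (F * (1 - fps_X)^m)"
proof -
  have d: "fps_deriv ((1 - fps_X)^m :: rat fps) * (1 - fps_X) = - of_nat m * (1 - fps_X)^m"
  proof (cases m)
    case 0 then show ?thesis by simp
  next
    case (Suc m')
    have "fps_deriv ((1 - fps_X)^m :: rat fps) = of_nat m * fps_deriv (1 - fps_X) * (1 - fps_X)^m'"
      using Suc by (simp only: fps_deriv_power') simp
    then have "fps_deriv ((1 - fps_X)^m :: rat fps) * (1 - fps_X) = - of_nat m * ((1 - fps_X) * (1 - fps_X)^m')"
      by (simp only: ac_simps) simp
    also have "(1 - fps_X) * (1 - fps_X)^m' = ((1 - fps_X)^m :: rat fps)" using Suc by simp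
    finally show ?thesis .
  qed
  have "UU m (F * (1 - fps_X)^m) = (1 - fps_X) * (F * (1 - fps_X)^m) + fps_X * fps_deriv F * (1 - fps_X)^m * (1 - fps_X)
      + fps_X * F * (fps_deriv ((1 - fps_X)^m) * (1 - fps_X)) + of_nat m * fps_X * (F * (1 - fps_X)^m)"
    by (simp add: UU_def algebra_simps)
  also have "\<dots> = EE F * (1 - fps_X)^(Suc m)"
    unfolding d EE_alt by (simp add: algebra_simps)
  finally show ?thesis by simp
qed

lemma I_rec:
  "of_nat (m+2) * Ipoly (m+2) = UU (m+2) (Ipoly (m+1)) + UU (m+2) (UU (m+1) (Ipoly m))
     + of_nat m * (1 - fps_X)^2 * Ipoly m"
proof -
  have "of_nat (m+2) * Ipoly (m+2) = (of_nat (m+2) * Phi (m+2)) * (1 - fps_X)^(Suc (m+2))"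
    by (simp add: Phi_Ipoly[symmetric] ac_simps)
  also have "\<dots> = EE (Phi (m+1)) * (1 - fps_X)^(Suc (m+2)) + EE (EE (Phi m)) * (1 - fps_X)^(Suc (m+2))
      + of_nat m * (Phi m * (1 - fps_X)^(Suc m)) * (1 - fps_X)^2"
    unfolding Phi_rec by (simp add: algebra_simps power_add[symmetric])
  also have "EE (Phi (m+1)) * (1 - fps_X)^(Suc (m+2)) = UU (m+2) (Ipoly (m+1))"
    using EU[of "Phi (m+1)" "m+2"] Phi_Ipoly[of "m+1"] by simp
  also have "EE (EE (Phi m)) * (1 - fps_X)^(Suc (m+2)) = UU (m+2) (UU (m+1) (Ipoly m))"
    using EU[of "EE (Phi m)" "m+2"] EU[of "Phi m" "m+1"] Phi_Ipoly[of m] by simp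
  also have "of_nat m * (Phi m * (1 - fps_X)^(Suc m)) * (1 - fps_X)^2 = of_nat m * (1 - fps_X)^2 * Ipoly m"
    by (simp only: Phi_Ipoly ac_simps)
  finally show ?thesis .
qed


lemma Ipoly_0: "Ipoly 0 = 1"
proof -
  have inv: "involutions 0 = {id}" by (auto simp: involutions_def)
  have "descents 0 id = {}" by (auto simp: descents_def)
  then have e: "{p \<in> involutions 0. card (descents 0 p) = k} = (if k = 0 then {id} else {})" for k
    by (auto simp: inv)
  have "Inv 0 k = (if k = 0 then 1 else 0)" for k by (simp add: Inv_def e)
  then show ?thesis by (intro fps_ext) (simp add: Ipoly_def)
qed

lemma Ipoly_1: "Ipoly (Suc 0) = 1"
proof -
  have inv: "involutions (Suc 0) = {id}" by (auto simp: involutions_def)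
  have "descents (Suc 0) id = {}" by (auto simp: descents_def)
  then have e: "{p \<in> involutions (Suc 0). card (descents (Suc 0) p) = k} = (if k = 0 then {id} else {})" for k
    by (auto simp: inv)
  have "Inv (Suc 0) k = (if k = 0 then 1 else 0)" for k by (simp add: Inv_def e)
  then show ?thesis by (intro fps_ext) (simp add: Ipoly_def)
qed

lemma UU_1: "UU m 1 = 1 + (of_nat m - 1) * fps_X"
  by (simp add: UU_def algebra_simps)

lemma Ipoly_2: "Ipoly 2 = 1 + fps_X"
proof -
  have h: "of_nat (0+2) * Ipoly (0+2) = UU (0+2) (Ipoly (0+1)) + UU (0+2) (UU (0+1) (Ipoly 0)) + of_nat 0 * (1 - fps_X)^2 * Ipoly 0"
    by (rule I_rec)
  then have "of_nat 2 * Ipoly 2 = UU 2 (Ipoly 1) + UU 2 (UU 1 (Ipoly 0))"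
    by (simp only: add_0 of_nat_0 mult_zero_left add_0_right)
  also have "\<dots> = of_nat 2 * (1 + fps_X)"
    by (simp add: Ipoly_0 Ipoly_1 UU_1 algebra_simps)
  finally have "of_nat 2 * Ipoly 2 = of_nat 2 * (1 + fps_X :: rat fps)" .
  then show ?thesis by (metis mult_cancel_left of_nat_eq_0_iff zero_neq_numeral of_nat_numeral)
qed

fun bb :: "nat \<Rightarrow> int \<Rightarrow> rat" where
  "bb 0 k = 0"
| "bb (Suc 0) k = (if k = 0 then 1 else 0)"
| "bb (Suc (Suc 0)) k = (if k = 0 then 1 else 0)"
| "bb (Suc (Suc (Suc m))) k = (if k < 0 \<or> 2*k > int m + 2 then 0 else
    (of_int (k + 1) * bb (Suc (Suc m)) k
    + of_int (2 * (int m + 3) - 4 * k) * bb (Suc (Suc m)) (k - 1)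
    + of_int (k * (k + 2) + (int m + 3) - 1) * bb (Suc m) k
    + of_int ((k - 1) * (4 * (int m + 3) - 8 * k - 14) + 2 * (int m + 3) - 8) * bb (Suc m) (k - 1)
    + of_int (4 * ((int m + 3) - 2 * k) * ((int m + 3) - 2 * k + 1)) * bb (Suc m) (k - 2)) / of_nat (m + 3))"

lemma bb_supp: "bb n k \<noteq> 0 \<Longrightarrow> 0 \<le> k \<and> 2 * k \<le> int n - 1"
proof (induction n k rule: bb.induct)
  case (4 m k) then show ?case by (auto split: if_splits)
qed (auto split: if_splits)

lemma bb_zero: "k < 0 \<or> 2 * k > int n - 1 \<Longrightarrow> bb n k = 0"
  using bb_supp by fastforce

definition rhs :: "nat \<Rightarrow> int \<Rightarrow> (nat \<Rightarrow> int \<Rightarrow> rat) \<Rightarrow> rat" where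
  "rhs n k f = of_int (k + 1) * f (n - 1) k
    + of_int (2 * int n - 4 * k) * f (n - 1) (k - 1)
    + of_int (k * (k + 2) + int n - 1) * f (n - 2) k
    + of_int ((k - 1) * (4 * int n - 8 * k - 14) + 2 * int n - 8) * f (n - 2) (k - 1)
    + of_int (4 * (int n - 2 * k) * (int n - 2 * k + 1)) * f (n - 2) (k - 2)"

lemma bb_rec:
  assumes n: "n \<ge> 3" and k: "k \<ge> 0"
  shows "of_nat n * bb n k = rhs n k bb"
proof -
  obtain m where m: "n = Suc (Suc (Suc m))" using n by (metis le_Suc_ex add_Suc numeral_3_eq_3 plus_nat.add_0)
  have nm1: "n - 1 = Suc (Suc m)" and nm2: "n - 2 = Suc m" and ni: "int n = int m + 3" using m by auto
  show ?thesis
  proof (cases "2 * k > int m + 2")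
    case False
    then have "bb n k = rhs n k bb / of_nat n"
      using k m by (simp add: rhs_def nm1 nm2 ni del: bb.simps(1,2,3)) (simp add: algebra_simps)
    then show ?thesis using n by simp
  next
    case True
    have z0: "bb n k = 0" by (rule bb_zero) (use True ni in auto)
    have z1: "bb (n-1) k = 0" by (rule bb_zero) (use True ni nm1 in auto)
    have z2: "of_int (2 * int n - 4 * k) * bb (n - 1) (k - 1) = 0"
    proof (cases "bb (n - 1) (k - 1) = 0")
      case False
      then have "2 * (k - 1) \<le> int (n - 1) - 1" using bb_supp by blast
      then have "2 * int n - 4 * k = 0" using True ni nm1 by simp
      then show ?thesis by simp
    qed simp
    have z3: "bb (n-2) k = 0" by (rule bb_zero) (use True ni nm2 in auto)
    have z4: "bb (n-2) (k-1) = 0" by (rule bb_zero) (use True ni nm2 in auto)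
    have z5: "of_int (4 * (int n - 2 * k) * (int n - 2 * k + 1)) * bb (n - 2) (k - 2) = 0"
    proof (cases "bb (n - 2) (k - 2) = 0")
      case False
      then have "2 * (k - 2) \<le> int (n - 2) - 1" using bb_supp by blast
      then have "int n - 2 * k = 0 \<or> int n - 2 * k + 1 = 0" using True ni nm2 by arith
      then have e: "4 * (int n - 2 * k) * (int n - 2 * k + 1) = 0" by auto
      show ?thesis by (simp only: e of_int_0 mult_zero_left)
    qed simp
    show ?thesis unfolding rhs_def z0 z1 z2 z3 z4 z5 by simp
  qed
qed


definition BB :: "nat \<Rightarrow> nat \<Rightarrow> rat fps" where
  "BB n k = fps_X^k * (1 + fps_X)^(n - 1 - 2*k)"

lemma XDX: "fps_X * fps_deriv (fps_X^k :: rat fps) = of_nat k * fps_X^k"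
proof (cases k)
  case 0 then show ?thesis by simp
next
  case (Suc k')
  have "fps_deriv (fps_X^k :: rat fps) = of_nat k * fps_X^k'"
    using Suc by (simp only: fps_deriv_power') simp
  then show ?thesis using Suc by (simp add: algebra_simps)
qed

lemma Dpow1: "fps_deriv ((1 + fps_X)^e :: rat fps) = of_nat e * (1 + fps_X)^(e - 1)"
  by (simp only: fps_deriv_power') simp

lemma XD: "fps_X * fps_deriv (fps_X^k * (1 + fps_X)^e :: rat fps)
    = of_nat k * (fps_X^k * (1 + fps_X)^e) + of_nat e * (fps_X * fps_X^k) * (1 + fps_X)^(e - 1)"
proof -
  have "fps_X * fps_deriv (fps_X^k * (1 + fps_X)^e :: rat fps)
      = (fps_X * fps_deriv (fps_X^k)) * (1 + fps_X)^e + fps_X * fps_X^k * fps_deriv ((1 + fps_X)^e)"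
    by (simp add: algebra_simps)
  also have "\<dots> = of_nat k * (fps_X^k * (1 + fps_X)^e) + of_nat e * (fps_X * fps_X^k) * (1 + fps_X)^(e - 1)"
    by (simp only: XDX Dpow1) (simp add: algebra_simps)
  finally show ?thesis .
qed

lemma E1:
  assumes "2*k+2 \<le> m"
  shows "UU m (BB (m-1) k) = of_nat (k+1) * BB m k + of_nat (2*m - 4*k - 4) * BB m (k+1)"
proof -
  obtain e where m: "m = 2*k + 2 + e" using assms by (metis le_Suc_ex)
  have b1: "BB (m-1) k = fps_X^k * (1 + fps_X)^e" using m by (simp add: BB_def)
  have b2: "BB m k = fps_X^k * (1 + fps_X)^(Suc e)" using m by (simp add: BB_def)
  have b3: "BB m (k+1) = (fps_X * fps_X^k) * (1 + fps_X)^(e - 1)" using m by (simp add: BB_def)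
  have c: "2*m - 4*k - 4 = 2*e" using m by simp
  have u: "UU m (BB (m-1) k) = (1 - fps_X) * (fps_X^k * (1 + fps_X)^e + of_nat k * (fps_X^k * (1 + fps_X)^e)
       + of_nat e * (fps_X * fps_X^k) * (1 + fps_X)^(e - 1)) + of_nat m * fps_X * (fps_X^k * (1 + fps_X)^e)"
    unfolding UU_def b1 XD by (simp only: add.assoc)
  show ?thesis
  proof (cases e)
    case 0
    show ?thesis unfolding u b2 b3 c using 0 m by (simp add: algebra_simps)
  next
    case (Suc e')
    show ?thesis unfolding u b2 b3 c using Suc m by (simp add: algebra_simps)
  qed
qed

lemma UU_add: "UU m (F + G) = UU m F + UU m G"
  by (simp add: UU_def algebra_simps)

lemma UU_cmult: "UU m (C * F) = C * UU m F" if "fps_deriv C = 0"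
  using that by (simp add: UU_def algebra_simps)

lemma UU_zero: "UU m 0 = 0"
  by (simp add: UU_def)

lemma UU_sum: "UU m (\<Sum>k\<in>A. f k) = (\<Sum>k\<in>A. UU m (f k))"
proof (induction A rule: infinite_finite_induct)
  case (infinite A) then show ?case by (simp add: UU_zero)
next
  case empty then show ?case by (simp add: UU_zero)
next
  case (insert x F) then show ?case by (simp add: UU_add)
qed

lemma ofnat_int: "(of_nat x :: rat fps) = of_int (int x)"
  by simp

lemma E2:
  assumes "2*k+3 \<le> n"
  shows "UU n (UU (n-1) (BB (n-2) k)) + of_nat (n-2) * (1 - fps_X)^2 * BB (n-2) k
       = of_int (int k * (int k + 2) + int n - 1) * BB n k
       + of_int (int k * (4 * int n - 8 * int k - 22) + 2 * int n - 8) * BB n (k+1)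
       + of_int (4 * (int n - 2 * int k - 4) * (int n - 2 * int k - 3)) * BB n (k+2)"
proof -
  have s1: "UU (n-1) (BB (n-2) k) = of_nat (k+1) * BB (n-1) k + of_nat (2*(n-1) - 4*k - 4) * BB (n-1) (k+1)"
  proof -
    have "UU (n-1) (BB (n-1-1) k) = of_nat (k+1) * BB (n-1) k + of_nat (2*(n-1) - 4*k - 4) * BB (n-1) (k+1)"
      by (rule E1) (use assms in arith)
    then show ?thesis by (simp only: diff_diff_left one_add_one)
  qed
  have s2: "UU n (BB (n-1) k) = of_nat (k+1) * BB n k + of_nat (2*n - 4*k - 4) * BB n (k+1)"
    by (rule E1) (use assms in arith)
  have s3: "of_nat (2*(n-1) - 4*k - 4) * UU n (BB (n-1) (k+1))
      = of_nat (2*(n-1) - 4*k - 4) * (of_nat (k+2) * BB n (k+1) + of_nat (2*n - 4*k - 8) * BB n (k+2))"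
  proof (cases "2*k+4 \<le> n")
    case True
    have e: "UU n (BB (n-1) (k+1)) = of_nat ((k+1)+1) * BB n (k+1) + of_nat (2*n - 4*(k+1) - 4) * BB n ((k+1)+1)"
      by (rule E1) (use True in arith)
    have f1: "(k+1)+1 = k+2" and f2: "2*n - 4*(k+1) - 4 = 2*n - 4*k - 8" by simp_all
    show ?thesis unfolding e f1 f2 ..
  next
    case False
    then have "2*(n-1) - 4*k - 4 = 0" using assms by simp
    then show ?thesis by simp
  qed
  have b0: "BB n k = (1 + fps_X)^2 * BB (n-2) k"
  proof -
    have "n - 1 - 2*k = Suc (Suc (n - 2 - 1 - 2*k))" using assms by simp
    then show ?thesis by (simp add: BB_def algebra_simps power2_eq_square)
  qed
  have b1: "BB n (k+1) = fps_X * BB (n-2) k"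
  proof -
    have "n - 1 - 2*(k+1) = n - 2 - 1 - 2*k" by simp
    then show ?thesis by (simp add: BB_def algebra_simps)
  qed
  have s4: "of_nat (n-2) * (1 - fps_X)^2 * BB (n-2) k = of_nat (n-2) * (BB n k - 4 * BB n (k+1))"
    unfolding b0 b1 by (simp add: algebra_simps power2_eq_square)
  have "UU n (UU (n-1) (BB (n-2) k)) = of_nat (k+1) * UU n (BB (n-1) k) + of_nat (2*(n-1) - 4*k - 4) * UU n (BB (n-1) (k+1))"
    unfolding s1 by (simp add: UU_add UU_cmult)
  also have "\<dots> = of_nat (k+1) * (of_nat (k+1) * BB n k + of_nat (2*n - 4*k - 4) * BB n (k+1))
      + of_nat (2*(n-1) - 4*k - 4) * (of_nat (k+2) * BB n (k+1) + of_nat (2*n - 4*k - 8) * BB n (k+2))"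
    unfolding s2 s3 ..
  finally have A: "UU n (UU (n-1) (BB (n-2) k)) = \<dots>" .
  have i1: "int (2*(n-1) - 4*k - 4) = 2 * int n - 4 * int k - 6" using assms by linarith
  have i2: "int (2*n - 4*k - 4) = 2 * int n - 4 * int k - 4" using assms by linarith
  have i3: "2*k+4 \<le> n \<Longrightarrow> int (2*n - 4*k - 8) = 2 * int n - 4 * int k - 8" by linarith
  have i4: "int (n - 2) = int n - 2" using assms by linarith
  show ?thesis
  proof (cases "2*k+4 \<le> n")
    case True
    show ?thesis unfolding A s4
      by (simp only: ofnat_int i1 i2 i3[OF True] i4) (simp add: algebra_simps)
  next
    case False
    then have n3: "int n = 2 * int k + 3" using assms by linarith
    have z: "2*(n-1) - 4*k - 4 = 0" using False assms by simp
    show ?thesis unfolding A s4 z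
      by (simp only: ofnat_int i2 i4 n3) (simp add: algebra_simps)
  qed
qed


definition Jpoly :: "nat \<Rightarrow> rat fps" where
  "Jpoly n = (\<Sum>k<n. fps_const (bb n (int k)) * BB n k)"

lemma bb_ge: "m \<le> k \<Longrightarrow> bb m (int k) = 0"
  by (rule bb_zero) simp

lemma sum_ext0: "(\<And>k. (m::nat) \<le> k \<Longrightarrow> f k = 0) \<Longrightarrow> m \<le> A \<Longrightarrow> (\<Sum>k<A. f k) = (\<Sum>k<m. f k)"
  by (rule sum.mono_neutral_right) (auto simp: not_less)

lemma UU_const: "UU m (fps_const c * F) = fps_const c * UU m F"
  by (rule UU_cmult) simp

lemma R1_expand:
  assumes n: "n \<ge> 3"
  shows "UU n (Jpoly (n-1)) = (\<Sum>k<n-1. fps_const (bb (n-1) (int k)) * (of_nat (k+1) * BB n k))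
      + (\<Sum>k<n-1. fps_const (bb (n-1) (int k)) * (of_nat (2*n - 4*k - 4) * BB n (k+1)))"
proof -
  have "UU n (Jpoly (n-1)) = (\<Sum>k<n-1. fps_const (bb (n-1) (int k)) * UU n (BB (n-1) k))"
    by (simp add: Jpoly_def UU_sum UU_const)
  also have "\<dots> = (\<Sum>k<n-1. fps_const (bb (n-1) (int k)) * (of_nat (k+1) * BB n k + of_nat (2*n - 4*k - 4) * BB n (k+1)))"
  proof (rule sum.cong[OF refl])
    fix k assume "k \<in> {..<n-1}"
    show "fps_const (bb (n-1) (int k)) * UU n (BB (n-1) k) = fps_const (bb (n-1) (int k)) * (of_nat (k+1) * BB n k + of_nat (2*n - 4*k - 4) * BB n (k+1))"
    proof (cases "bb (n-1) (int k) = 0")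
      case False
      then have "2 * int k \<le> int (n-1) - 1" using bb_supp by blast
      then have "2*k+2 \<le> n" by linarith
      then show ?thesis by (simp only: E1)
    qed simp
  qed
  also have "\<dots> = (\<Sum>k<n-1. fps_const (bb (n-1) (int k)) * (of_nat (k+1) * BB n k))
      + (\<Sum>k<n-1. fps_const (bb (n-1) (int k)) * (of_nat (2*n - 4*k - 4) * BB n (k+1)))"
    by (simp add: distrib_left sum.distrib)
  finally show ?thesis .
qed

lemma R2_expand:
  assumes n: "n \<ge> 3"
  shows "UU n (UU (n-1) (Jpoly (n-2))) + of_nat (n-2) * (1 - fps_X)^2 * Jpoly (n-2)
    = (\<Sum>k<n-2. fps_const (bb (n-2) (int k)) * (of_int (int k * (int k + 2) + int n - 1) * BB n k))
    + (\<Sum>k<n-2. fps_const (bb (n-2) (int k)) * (of_int (int k * (4 * int n - 8 * int k - 22) + 2 * int n - 8) * BB n (k+1)))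
    + (\<Sum>k<n-2. fps_const (bb (n-2) (int k)) * (of_int (4 * (int n - 2 * int k - 4) * (int n - 2 * int k - 3)) * BB n (k+2)))"
proof -
  have "UU n (UU (n-1) (Jpoly (n-2))) + of_nat (n-2) * (1 - fps_X)^2 * Jpoly (n-2)
      = (\<Sum>k<n-2. fps_const (bb (n-2) (int k)) * (UU n (UU (n-1) (BB (n-2) k)) + of_nat (n-2) * (1 - fps_X)^2 * BB (n-2) k))"
  proof -
    have a: "UU n (UU (n-1) (Jpoly (n-2))) = (\<Sum>k<n-2. fps_const (bb (n-2) (int k)) * UU n (UU (n-1) (BB (n-2) k)))"
      by (simp only: Jpoly_def UU_sum UU_const)
    have b: "of_nat (n-2) * (1 - fps_X)^2 * Jpoly (n-2) = (\<Sum>k<n-2. fps_const (bb (n-2) (int k)) * (of_nat (n-2) * (1 - fps_X)^2 * BB (n-2) k))"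
      by (simp add: Jpoly_def sum_distrib_left ac_simps)
    show ?thesis unfolding a b by (simp only: distrib_left sum.distrib)
  qed
  also have "\<dots> = (\<Sum>k<n-2. fps_const (bb (n-2) (int k)) * (
         of_int (int k * (int k + 2) + int n - 1) * BB n k
       + of_int (int k * (4 * int n - 8 * int k - 22) + 2 * int n - 8) * BB n (k+1)
       + of_int (4 * (int n - 2 * int k - 4) * (int n - 2 * int k - 3)) * BB n (k+2)))"
  proof (rule sum.cong[OF refl])
    fix k assume "k \<in> {..<n-2}"
    show "fps_const (bb (n-2) (int k)) * (UU n (UU (n-1) (BB (n-2) k)) + of_nat (n-2) * (1 - fps_X)^2 * BB (n-2) k)
      = fps_const (bb (n-2) (int k)) * (
         of_int (int k * (int k + 2) + int n - 1) * BB n k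
       + of_int (int k * (4 * int n - 8 * int k - 22) + 2 * int n - 8) * BB n (k+1)
       + of_int (4 * (int n - 2 * int k - 4) * (int n - 2 * int k - 3)) * BB n (k+2))"
    proof (cases "bb (n-2) (int k) = 0")
      case False
      then have "2 * int k \<le> int (n-2) - 1" using bb_supp by blast
      then have "2*k+3 \<le> n" by linarith
      then show ?thesis by (simp only: E2)
    qed simp
  qed
  also have "\<dots> = (\<Sum>k<n-2. fps_const (bb (n-2) (int k)) * (of_int (int k * (int k + 2) + int n - 1) * BB n k))
    + (\<Sum>k<n-2. fps_const (bb (n-2) (int k)) * (of_int (int k * (4 * int n - 8 * int k - 22) + 2 * int n - 8) * BB n (k+1)))
    + (\<Sum>k<n-2. fps_const (bb (n-2) (int k)) * (of_int (4 * (int n - 2 * int k - 4) * (int n - 2 * int k - 3)) * BB n (k+2)))"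
    by (simp only: distrib_left sum.distrib)
  finally show ?thesis .
qed

lemma L_expand:
  assumes n: "n \<ge> 3"
  shows "of_nat n * Jpoly n =
      (\<Sum>k<n. fps_const (of_int (int k + 1) * bb (n-1) (int k)) * BB n k)
    + (\<Sum>k<n. fps_const (of_int (2 * int n - 4 * int k) * bb (n-1) (int k - 1)) * BB n k)
    + (\<Sum>k<n. fps_const (of_int (int k * (int k + 2) + int n - 1) * bb (n-2) (int k)) * BB n k)
    + (\<Sum>k<n. fps_const (of_int ((int k - 1) * (4 * int n - 8 * int k - 14) + 2 * int n - 8) * bb (n-2) (int k - 1)) * BB n k)
    + (\<Sum>k<n. fps_const (of_int (4 * (int n - 2 * int k) * (int n - 2 * int k + 1)) * bb (n-2) (int k - 2)) * BB n k)"
proof -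
  have "of_nat n * Jpoly n = (\<Sum>k<n. fps_const (of_nat n * bb n (int k)) * BB n k)"
    by (simp add: Jpoly_def sum_distrib_left fps_of_nat[symmetric] mult.assoc[symmetric])
  also have "\<dots> = (\<Sum>k<n. fps_const (rhs n (int k) bb) * BB n k)"
    by (rule sum.cong[OF refl]) (simp add: bb_rec[OF n])
  finally have "of_nat n * Jpoly n = (\<Sum>k<n. fps_const (rhs n (int k) bb) * BB n k)" .
  then show ?thesis unfolding rhs_def fps_const_add[symmetric] distrib_right sum.distrib .
qed

lemma M1:
  assumes n: "n \<ge> 3"
  shows "(\<Sum>k<n. fps_const (of_int (int k + 1) * bb (n-1) (int k)) * BB n k)
       = (\<Sum>k<n-1. fps_const (bb (n-1) (int k)) * (of_nat (k+1) * BB n k))"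
proof -
  have "(\<Sum>k<n. fps_const (of_int (int k + 1) * bb (n-1) (int k)) * BB n k)
      = (\<Sum>k<n-1. fps_const (of_int (int k + 1) * bb (n-1) (int k)) * BB n k)"
    by (rule sum_ext0) (simp_all add: bb_ge)
  also have "\<dots> = (\<Sum>k<n-1. fps_const (bb (n-1) (int k)) * (of_nat (k+1) * BB n k))"
    by (rule sum.cong[OF refl]) (simp add: fps_of_nat[symmetric] ac_simps)
  finally show ?thesis .
qed

lemma M2:
  assumes n: "n \<ge> 3"
  shows "(\<Sum>k<n. fps_const (of_int (2 * int n - 4 * int k) * bb (n-1) (int k - 1)) * BB n k)
       = (\<Sum>k<n-1. fps_const (bb (n-1) (int k)) * (of_nat (2*n - 4*k - 4) * BB n (k+1)))"
proof -
  have ns: "n = Suc (n-1)" using n by simp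
  have "(\<Sum>k<n. fps_const (of_int (2 * int n - 4 * int k) * bb (n-1) (int k - 1)) * BB n k)
     = fps_const (of_int (2 * int n - 4 * int 0) * bb (n-1) (int 0 - 1)) * BB n 0
       + (\<Sum>k<n-1. fps_const (of_int (2 * int n - 4 * int (Suc k)) * bb (n-1) (int (Suc k) - 1)) * BB n (Suc k))"
    by (subst ns, subst sum.lessThan_Suc_shift) simp
  also have "\<dots> = (\<Sum>k<n-1. fps_const (bb (n-1) (int k)) * (of_nat (2*n - 4*k - 4) * BB n (k+1)))"
  proof -
    have z: "bb (n-1) (int 0 - 1) = 0" by (rule bb_zero) simp
    have "(\<Sum>k<n-1. fps_const (of_int (2 * int n - 4 * int (Suc k)) * bb (n-1) (int (Suc k) - 1)) * BB n (Suc k))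
        = (\<Sum>k<n-1. fps_const (bb (n-1) (int k)) * (of_nat (2*n - 4*k - 4) * BB n (k+1)))"
    proof (rule sum.cong[OF refl])
      fix k assume "k \<in> {..<n-1}"
      show "fps_const (of_int (2 * int n - 4 * int (Suc k)) * bb (n-1) (int (Suc k) - 1)) * BB n (Suc k)
          = fps_const (bb (n-1) (int k)) * (of_nat (2*n - 4*k - 4) * BB n (k+1))"
      proof (cases "bb (n-1) (int k) = 0")
        case False
        then have "2 * int k \<le> int (n-1) - 1" using bb_supp by blast
        then have "2*k+2 \<le> n" using n by linarith
        then have "int (2*n - 4*k - 4) = 2 * int n - 4 * int (Suc k)" by presburger
        then have "(of_nat (2*n - 4*k - 4) :: rat) = of_int (2 * int n - 4 * int (Suc k))"
          by (metis of_int_of_nat_eq)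
        then show ?thesis by (simp add: fps_of_nat[symmetric] ac_simps)
      qed simp
    qed
    then show ?thesis using z by simp
  qed
  finally show ?thesis .
qed

lemma M3:
  assumes n: "n \<ge> 3"
  shows "(\<Sum>k<n. fps_const (of_int (int k * (int k + 2) + int n - 1) * bb (n-2) (int k)) * BB n k)
       = (\<Sum>k<n-2. fps_const (bb (n-2) (int k)) * (of_int (int k * (int k + 2) + int n - 1) * BB n k))"
proof -
  have "(\<Sum>k<n. fps_const (of_int (int k * (int k + 2) + int n - 1) * bb (n-2) (int k)) * BB n k)
      = (\<Sum>k<n-2. fps_const (of_int (int k * (int k + 2) + int n - 1) * bb (n-2) (int k)) * BB n k)"
    by (rule sum_ext0) (simp_all add: bb_ge)
  also have "\<dots> = (\<Sum>k<n-2. fps_const (bb (n-2) (int k)) * (of_int (int k * (int k + 2) + int n - 1) * BB n k))"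
    by (rule sum.cong[OF refl]) (simp only: fps_of_int[symmetric] fps_const_mult[symmetric] ac_simps)
  finally show ?thesis .
qed

lemma M4:
  assumes n: "n \<ge> 3"
  shows "(\<Sum>k<n. fps_const (of_int ((int k - 1) * (4 * int n - 8 * int k - 14) + 2 * int n - 8) * bb (n-2) (int k - 1)) * BB n k)
       = (\<Sum>k<n-2. fps_const (bb (n-2) (int k)) * (of_int (int k * (4 * int n - 8 * int k - 22) + 2 * int n - 8) * BB n (k+1)))"
proof -
  have ns: "n = Suc (n-1)" using n by simp
  have z: "bb (n-2) (int 0 - 1) = 0" by (rule bb_zero) simp
  have "(\<Sum>k<n. fps_const (of_int ((int k - 1) * (4 * int n - 8 * int k - 14) + 2 * int n - 8) * bb (n-2) (int k - 1)) * BB n k)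
     = fps_const (of_int ((int 0 - 1) * (4 * int n - 8 * int 0 - 14) + 2 * int n - 8) * bb (n-2) (int 0 - 1)) * BB n 0
       + (\<Sum>k<n-1. fps_const (of_int ((int (Suc k) - 1) * (4 * int n - 8 * int (Suc k) - 14) + 2 * int n - 8) * bb (n-2) (int (Suc k) - 1)) * BB n (Suc k))"
    by (subst ns, subst sum.lessThan_Suc_shift) simp
  also have "\<dots> = (\<Sum>k<n-1. fps_const (of_int ((int (Suc k) - 1) * (4 * int n - 8 * int (Suc k) - 14) + 2 * int n - 8) * bb (n-2) (int (Suc k) - 1)) * BB n (Suc k))"
    using z by simp
  also have "\<dots> = (\<Sum>k<n-1. fps_const (bb (n-2) (int k)) * (of_int (int k * (4 * int n - 8 * int k - 22) + 2 * int n - 8) * BB n (k+1)))"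
  proof (rule sum.cong[OF refl])
    fix k
    have c: "(int (Suc k) - 1) * (4 * int n - 8 * int (Suc k) - 14) + 2 * int n - 8 = int k * (4 * int n - 8 * int k - 22) + 2 * int n - 8"
      by (simp add: algebra_simps)
    show "fps_const (of_int ((int (Suc k) - 1) * (4 * int n - 8 * int (Suc k) - 14) + 2 * int n - 8) * bb (n-2) (int (Suc k) - 1)) * BB n (Suc k)
        = fps_const (bb (n-2) (int k)) * (of_int (int k * (4 * int n - 8 * int k - 22) + 2 * int n - 8) * BB n (k+1))"
      unfolding c by (simp only: fps_of_int[symmetric] fps_const_mult[symmetric] ac_simps) simp
  qed
  also have "\<dots> = (\<Sum>k<n-2. fps_const (bb (n-2) (int k)) * (of_int (int k * (4 * int n - 8 * int k - 22) + 2 * int n - 8) * BB n (k+1)))"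
    by (rule sum_ext0) (simp_all add: bb_ge)
  finally show ?thesis .
qed

lemma M5:
  assumes n: "n \<ge> 3"
  shows "(\<Sum>k<n. fps_const (of_int (4 * (int n - 2 * int k) * (int n - 2 * int k + 1)) * bb (n-2) (int k - 2)) * BB n k)
       = (\<Sum>k<n-2. fps_const (bb (n-2) (int k)) * (of_int (4 * (int n - 2 * int k - 4) * (int n - 2 * int k - 3)) * BB n (k+2)))"
proof -
  have ns: "n = Suc (Suc (n-2))" using n by simp
  have z0: "bb (n-2) (int 0 - 2) = 0" by (rule bb_zero) simp
  have z1: "bb (n-2) (int (Suc 0) - 2) = 0" by (rule bb_zero) simp
  have "(\<Sum>k<n. fps_const (of_int (4 * (int n - 2 * int k) * (int n - 2 * int k + 1)) * bb (n-2) (int k - 2)) * BB n k)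
     = fps_const (of_int (4 * (int n - 2 * int 0) * (int n - 2 * int 0 + 1)) * bb (n-2) (int 0 - 2)) * BB n 0
       + (fps_const (of_int (4 * (int n - 2 * int (Suc 0)) * (int n - 2 * int (Suc 0) + 1)) * bb (n-2) (int (Suc 0) - 2)) * BB n (Suc 0)
       + (\<Sum>k<n-2. fps_const (of_int (4 * (int n - 2 * int (Suc (Suc k))) * (int n - 2 * int (Suc (Suc k)) + 1)) * bb (n-2) (int (Suc (Suc k)) - 2)) * BB n (Suc (Suc k))))"
    by (subst ns, subst sum.lessThan_Suc_shift, subst sum.lessThan_Suc_shift) simp
  also have "\<dots> = (\<Sum>k<n-2. fps_const (of_int (4 * (int n - 2 * int (Suc (Suc k))) * (int n - 2 * int (Suc (Suc k)) + 1)) * bb (n-2) (int (Suc (Suc k)) - 2)) * BB n (Suc (Suc k)))"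
    by (simp only: z0 z1) simp
  also have "\<dots> = (\<Sum>k<n-2. fps_const (bb (n-2) (int k)) * (of_int (4 * (int n - 2 * int k - 4) * (int n - 2 * int k - 3)) * BB n (k+2)))"
  proof (rule sum.cong[OF refl])
    fix k
    have c: "4 * (int n - 2 * int (Suc (Suc k))) * (int n - 2 * int (Suc (Suc k)) + 1) = 4 * (int n - 2 * int k - 4) * (int n - 2 * int k - 3)"
      by (simp add: algebra_simps)
    have d: "int (Suc (Suc k)) - 2 = int k" by simp
    show "fps_const (of_int (4 * (int n - 2 * int (Suc (Suc k))) * (int n - 2 * int (Suc (Suc k)) + 1)) * bb (n-2) (int (Suc (Suc k)) - 2)) * BB n (Suc (Suc k))
        = fps_const (bb (n-2) (int k)) * (of_int (4 * (int n - 2 * int k - 4) * (int n - 2 * int k - 3)) * BB n (k+2))"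
      unfolding c d by (simp only: fps_of_int[symmetric] fps_const_mult[symmetric] ac_simps) simp
  qed
  finally show ?thesis .
qed

lemma J_rec:
  assumes n: "n \<ge> 3"
  shows "of_nat n * Jpoly n = UU n (Jpoly (n-1)) + UU n (UU (n-1) (Jpoly (n-2))) + of_nat (n-2) * (1 - fps_X)^2 * Jpoly (n-2)"
proof -
  have "UU n (Jpoly (n-1)) + UU n (UU (n-1) (Jpoly (n-2))) + of_nat (n-2) * (1 - fps_X)^2 * Jpoly (n-2)
      = UU n (Jpoly (n-1)) + (UU n (UU (n-1) (Jpoly (n-2))) + of_nat (n-2) * (1 - fps_X)^2 * Jpoly (n-2))"
    by (simp only: add.assoc)
  also have "\<dots> = of_nat n * Jpoly n"
    unfolding R1_expand[OF n] R2_expand[OF n] L_expand[OF n] M1[OF n] M2[OF n] M3[OF n] M4[OF n] M5[OF n]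
    by (simp only: add.assoc)
  finally show ?thesis by simp
qed


lemma Jpoly_1: "Jpoly (Suc 0) = 1"
  by (simp add: Jpoly_def BB_def)

lemma Jpoly_2: "Jpoly 2 = 1 + fps_X"
proof -
  have "Jpoly 2 = fps_const (bb 2 0) * BB 2 0 + fps_const (bb 2 1) * BB 2 1"
    by (simp add: Jpoly_def numeral_2_eq_2)
  moreover have "bb 2 0 = 1" "bb 2 1 = 0" by (simp_all add: numeral_2_eq_2)
  ultimately show ?thesis by (simp add: BB_def)
qed

lemma J_eq_I: "n \<ge> 1 \<Longrightarrow> Jpoly n = Ipoly n"
proof (induction n rule: less_induct)
  case (less n)
  show ?case
  proof (cases "n \<ge> 3")
    case False
    then have "n = 1 \<or> n = 2" using less.prems by auto
    then show ?thesis using Jpoly_1 Jpoly_2 Ipoly_1 Ipoly_2 by auto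
  next
    case True
    define m where "m = n - 2"
    have m: "n = m + 2" using True by (simp add: m_def)
    have e1: "n - 1 = m + 1" and e2: "n - 2 = m" using True by (simp_all add: m_def)
    have IR: "of_nat n * Ipoly n = UU n (Ipoly (m+1)) + UU n (UU (m+1) (Ipoly m)) + of_nat m * (1 - fps_X)^2 * Ipoly m"
      using I_rec[of m] unfolding m[symmetric] .
    have "of_nat n * Jpoly n = UU n (Jpoly (n-1)) + UU n (UU (n-1) (Jpoly (n-2))) + of_nat (n-2) * (1 - fps_X)^2 * Jpoly (n-2)"
      by (rule J_rec[OF True])
    also have "Jpoly (n-1) = Ipoly (n-1)" by (rule less.IH) (use True in auto)
    also have "Jpoly (n-2) = Ipoly (n-2)" by (rule less.IH) (use True in auto)
    also have "UU n (Ipoly (n-1)) + UU n (UU (n-1) (Ipoly (n-2))) + of_nat (n-2) * (1 - fps_X)^2 * Ipoly (n-2)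
        = of_nat n * Ipoly n"
      unfolding e1 e2 IR ..
    finally have "of_nat n * Jpoly n = of_nat n * Ipoly n" .
    moreover have "(of_nat n :: rat fps) \<noteq> 0" using True by simp
    ultimately show ?thesis by (metis mult_cancel_left)
  qed
qed

lemma onepX_nth: "((1 + fps_X)^e :: rat fps) $ j = of_nat (e choose j)"
  by (simp add: fps_binomial_of_nat[symmetric] binomial_gbinomial)

definition Bc :: "nat \<Rightarrow> nat \<Rightarrow> nat \<Rightarrow> rat" where
  "Bc n l i = (if i < l then 0 else of_nat ((n - 1 - 2*l) choose (i - l)))"

lemma BB_nth: "BB n l $ i = Bc n l i"
  by (simp add: BB_def Bc_def fps_X_power_mult_nth onepX_nth)

lemma Inv_expand: "n \<ge> 1 \<Longrightarrow> of_nat (Inv n i) = (\<Sum>l<n. bb n (int l) * Bc n l i)"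
proof -
  assume n: "n \<ge> 1"
  have "of_nat (Inv n i) = Ipoly n $ i" by (simp add: Ipoly_def)
  also have "\<dots> = Jpoly n $ i" using J_eq_I[OF n] by simp
  also have "\<dots> = (\<Sum>l<n. bb n (int l) * Bc n l i)"
    by (simp add: Jpoly_def fps_sum_nth BB_nth)
  finally show ?thesis .
qed

definition Lc :: "nat \<Rightarrow> nat \<Rightarrow> rat" where
  "Lc M s = (if s = 0 then 1 else of_nat ((M + s) choose s) + of_nat ((M + s - 1) choose (s - 1)))"

definition BN :: "nat \<Rightarrow> rat fps" where
  "BN M = Abs_fps (\<lambda>s. (-1)^s * of_nat ((M + s) choose s))"

definition AF :: "nat \<Rightarrow> rat fps" where
  "AF M = Abs_fps (\<lambda>s. (-1)^s * Lc M s)"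

lemma mult_1pX_nth: "((F::rat fps) * (1 + fps_X)) $ k = F $ k + (if k = 0 then 0 else F $ (k - 1))"
proof -
  have "F * (1 + fps_X) = F + fps_X * F" by (simp add: algebra_simps)
  then show ?thesis by simp
qed

lemma AF_eq: "AF M = BN M * (1 - fps_X)"
proof (rule fps_ext)
  fix s
  show "AF M $ s = (BN M * (1 - fps_X)) $ s"
  proof (cases s)
    case 0 then show ?thesis by (simp add: AF_def BN_def Lc_def mult_1mX_nth)
  next
    case (Suc s')
    then show ?thesis by (simp add: AF_def BN_def Lc_def mult_1mX_nth algebra_simps)
  qed
qed

lemma BN_step0: "BN 0 * (1 + fps_X) = 1"
proof (rule fps_ext)
  fix s show "(BN 0 * (1 + fps_X)) $ s = 1 $ s"
    by (cases s) (simp_all add: BN_def mult_1pX_nth)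
qed

lemma BN_step: "BN (Suc M) * (1 + fps_X) = BN M"
proof (rule fps_ext)
  fix s
  show "(BN (Suc M) * (1 + fps_X)) $ s = BN M $ s"
  proof (cases s)
    case 0 then show ?thesis by (simp add: BN_def mult_1pX_nth)
  next
    case (Suc s')
    have "((Suc M + Suc s') choose Suc s') = ((M + Suc s') choose Suc s') + ((Suc M + s') choose s')"
      by simp
    then show ?thesis using Suc by (simp add: BN_def mult_1pX_nth algebra_simps)
  qed
qed

lemma BN_inv: "BN M * (1 + fps_X)^(Suc M) = 1"
proof (induction M)
  case 0 then show ?case using BN_step0 by simp
next
  case (Suc M)
  have "BN (Suc M) * (1 + fps_X)^(Suc (Suc M)) = (BN (Suc M) * (1 + fps_X)) * (1 + fps_X)^(Suc M)"
    by (simp only: power_Suc ac_simps)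
  also have "\<dots> = BN M * (1 + fps_X)^(Suc M)" by (simp only: BN_step)
  also have "\<dots> = 1" by (rule Suc.IH)
  finally show ?case .
qed

lemma key_identity:
  "(\<Sum>q\<le>p. of_nat ((M + 2*p) choose q) * ((-1)^(p-q) * Lc M (p-q))) = (if p = 0 then 1 else (0::rat))"
proof (cases p)
  case 0 then show ?thesis by (simp add: Lc_def)
next
  case (Suc p')
  have "(\<Sum>q\<le>p. of_nat ((M + 2*p) choose q) * ((-1)^(p-q) * Lc M (p-q))) = ((1 + fps_X)^(M + 2*p) * AF M) $ p"
    by (simp add: fps_mult_nth onepX_nth AF_def atLeast0AtMost)
  also have "(1 + fps_X)^(M + 2*p) * AF M = ((1 + fps_X)^(2*p'+1) * (1 - fps_X)) * (BN M * (1 + fps_X)^(Suc M))"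
  proof -
    have "M + 2*p = (2*p'+1) + Suc M" using Suc by simp
    then show ?thesis by (simp only: power_add AF_eq ac_simps)
  qed
  also have "\<dots> = (1 + fps_X)^(2*p'+1) * (1 - fps_X)" by (simp only: BN_inv mult_1_right)
  also have "\<dots> $ p = 0"
  proof -
    have "((1 + fps_X)^(2*p'+1) * (1 - fps_X) :: rat fps) $ p = of_nat ((2*p'+1) choose p) - of_nat ((2*p'+1) choose p')"
      unfolding mult_1mX_nth onepX_nth using Suc by simp
    moreover have "(2*p'+1) choose p = (2*p'+1) choose p'"
      using Suc binomial_symmetric[of p' "2*p'+1"] by simp
    ultimately show ?thesis by simp
  qed
  finally show ?thesis using Suc by simp
qed

definition cc :: "nat \<Rightarrow> nat \<Rightarrow> nat \<Rightarrow> rat" where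
  "cc n j i = (-1)^(j-i) * Lc (n - 1 - 2*j) (j - i)"

lemma inv_identity:
  assumes lj: "l \<le> j" and jn: "2*j+1 \<le> n"
  shows "(\<Sum>i\<le>j. cc n j i * Bc n l i) = (if l = j then 1 else 0)"
proof -
  define p where "p = j - l"
  define M where "M = n - 1 - 2*j"
  have j: "j = p + l" using lj by (simp add: p_def)
  have nl: "n - 1 - 2*l = M + 2*p" using lj jn by (simp add: p_def M_def)
  have "(\<Sum>i\<le>j. cc n j i * Bc n l i) = (\<Sum>i\<in>{l..j}. cc n j i * Bc n l i)"
    by (rule sum.mono_neutral_right) (auto simp: Bc_def)
  also have "\<dots> = (\<Sum>q\<in>{0..p}. cc n j (q + l) * Bc n l (q + l))"
    using sum.shift_bounds_cl_nat_ivl[of "\<lambda>i. cc n j i * Bc n l i" 0 l p] j by simp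
  also have "\<dots> = (\<Sum>q\<le>p. of_nat ((M + 2*p) choose q) * ((-1)^(p-q) * Lc M (p-q)))"
  proof (rule sum.cong)
    show "{0..p} = {..p}" by auto
  next
    fix q assume q: "q \<in> {..p}"
    have "j - (q + l) = p - q" using j q by simp
    moreover have "n - Suc (2*l) = n - Suc (2*j) + 2*p" using nl by (simp add: M_def)
    ultimately show "cc n j (q + l) * Bc n l (q + l) = of_nat ((M + 2*p) choose q) * ((-1)^(p-q) * Lc M (p-q))"
      by (simp add: cc_def Bc_def M_def)
  qed
  also have "\<dots> = (if p = 0 then 1 else 0)" by (rule key_identity)
  finally show ?thesis using lj by (auto simp: p_def)
qed

lemma term_a_lt:
  assumes ij: "i < j" and jm: "2*j+1 \<le> m"
  shows "term_a m j i = cc m j i * of_nat (Inv m i)"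
proof -
  define s where "s = j - i"
  define M where "M = m - 1 - 2*j"
  have s1: "s \<ge> 1" using ij by (simp add: s_def)
  have e1: "m - 2*i - 1 = M + 2*s" and e2: "m - j - i - 1 = M + s" and e3: "j - i = s"
    using ij jm by (simp_all add: s_def M_def)
  have pos: "M + s > 0" using s1 by simp
  have tb: "s * ((M + s) choose s) = (M + s) * ((M + s - 1) choose (s - 1))"
    using times_binomial_minus1_eq[of s "M + s"] s1 by simp
  then have tbr: "of_nat s * of_nat ((M + s) choose s) = (of_nat (M + s) * of_nat ((M + s - 1) choose (s - 1)) :: rat)"
    by (metis of_nat_mult)
  have key: "of_nat (M + 2*s) / of_nat (M + s) * of_nat ((M + s) choose s)
      = of_nat ((M + s) choose s) + (of_nat ((M + s - 1) choose (s - 1)) :: rat)"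
  proof -
    have "of_nat (M + 2*s) * of_nat ((M + s) choose s) = of_nat (M + s) * (of_nat ((M + s) choose s) + (of_nat ((M + s - 1) choose (s - 1)) :: rat))"
      using tbr by (simp add: algebra_simps)
    then have h: "of_nat (M + 2*s) * of_nat ((M + s) choose s) = of_nat (M + s) * (of_nat ((M + s) choose s) + (of_nat ((M + s - 1) choose (s - 1)) :: rat))" .
    have nz: "(of_nat (M + s) :: rat) \<noteq> 0" using pos by (metis gr_implies_not0 of_nat_eq_0_iff)
    have "of_nat (M + 2*s) / of_nat (M + s) * of_nat ((M + s) choose s) = (of_nat (M + 2*s) * of_nat ((M + s) choose s)) / (of_nat (M + s) :: rat)"
      by simp
    also have "\<dots> = (of_nat (M + s) * (of_nat ((M + s) choose s) + (of_nat ((M + s - 1) choose (s - 1)) :: rat))) / of_nat (M + s)"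
      unfolding h ..
    also have "\<dots> = of_nat ((M + s) choose s) + (of_nat ((M + s - 1) choose (s - 1)) :: rat)"
      using nz by simp
    finally show ?thesis .
  qed
  have e4: "m - 1 - 2*j = M" by (simp add: M_def)
  have sn: "s \<noteq> 0" using s1 by simp
  have "term_a m j i = (-1)^s * (of_nat (M + 2*s) / of_nat (M + s) * of_nat ((M + s) choose s)) * of_nat (Inv m i)"
    unfolding term_a_def e1 e2 e3 by (simp only: mult.assoc)
  also have "\<dots> = (-1)^s * (of_nat ((M + s) choose s) + of_nat ((M + s - 1) choose (s - 1))) * of_nat (Inv m i)"
    unfolding key ..
  also have "\<dots> = cc m j i * of_nat (Inv m i)"
    unfolding cc_def e3 e4 Lc_def using sn by simp
  finally show ?thesis .
qed

lemma term_a_eq_j: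
  assumes jm: "2*j+1 < m"
  shows "term_a m j j = of_nat (Inv m j)"
proof -
  have "m - 2*j - 1 > 0" "m - j - j - 1 = m - 2*j - 1" using jm by simp_all
  then show ?thesis by (simp add: term_a_def)
qed

lemma a_nat_cc:
  assumes jn: "2*j+1 \<le> n"
  shows "a_nat n j = (\<Sum>i\<le>j. cc n j i * of_nat (Inv n i))"
proof -
  have ccj: "cc n j j = 1" by (simp add: cc_def Lc_def)
  have split: "(\<Sum>i\<le>j. cc n j i * of_nat (Inv n i)) = (\<Sum>i<j. cc n j i * of_nat (Inv n i)) + of_nat (Inv n j)"
    using ccj by (simp add: lessThan_Suc_atMost[symmetric])
  have lt: "(\<Sum>i<j. term_a n j i) = (\<Sum>i<j. cc n j i * of_nat (Inv n i))"
    by (rule sum.cong[OF refl]) (use term_a_lt jn in auto)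
  show ?thesis
  proof (cases "2*j+1 < n")
    case True
    have "a_nat n j = (\<Sum>i\<in>{0..j}. term_a n j i)" using True by (simp add: a_nat_def)
    also have "\<dots> = (\<Sum>i<j. term_a n j i) + term_a n j j"
      by (simp add: atLeast0AtMost lessThan_Suc_atMost[symmetric])
    finally show ?thesis using lt split term_a_eq_j[OF True] by simp
  next
    case False
    then have eq: "2*j+1 = n" using jn by simp
    have "a_nat n j = of_nat (Inv n j) + (\<Sum>i\<in>{0..<j}. term_a n j i)" using eq by (simp add: a_nat_def)
    then show ?thesis using lt split by (simp add: atLeast0LessThan)
  qed
qed

lemma a_eq_bb:
  assumes n: "n \<ge> 1"
  shows "a n k = bb n k"
proof (cases "k < 0")
  case True then show ?thesis by (simp add: a_def bb_zero)
next
  case False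
  define j where "j = nat k"
  have kj: "k = int j" using False by (simp add: j_def)
  show ?thesis
  proof (cases "2*j+1 \<le> n")
    case False
    have "a_nat n j = 0" using False by (simp add: a_nat_def)
    moreover have "bb n k = 0" by (rule bb_zero) (use False kj in linarith)
    ultimately show ?thesis using kj by (simp add: a_def)
  next
    case True
    have "a_nat n j = (\<Sum>i\<le>j. cc n j i * (\<Sum>l<n. bb n (int l) * Bc n l i))"
      unfolding a_nat_cc[OF True] using Inv_expand[OF n] by simp
    also have "\<dots> = (\<Sum>i\<le>j. \<Sum>l<n. bb n (int l) * (cc n j i * Bc n l i))"
      by (simp only: sum_distrib_left mult.left_commute)
    also have "\<dots> = (\<Sum>l<n. \<Sum>i\<le>j. bb n (int l) * (cc n j i * Bc n l i))"
      by (rule sum.swap)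
    also have "\<dots> = (\<Sum>l<n. bb n (int l) * (\<Sum>i\<le>j. cc n j i * Bc n l i))"
      by (simp only: sum_distrib_left)
    also have "\<dots> = (\<Sum>l<n. bb n (int l) * (if l = j then 1 else 0))"
    proof (rule sum.cong[OF refl])
      fix l assume "l \<in> {..<n}"
      show "bb n (int l) * (\<Sum>i\<le>j. cc n j i * Bc n l i) = bb n (int l) * (if l = j then 1 else 0)"
      proof (cases "l \<le> j")
        case True then show ?thesis using inv_identity[OF True \<open>2*j+1 \<le> n\<close>] by simp
      next
        case False
        then have "(\<Sum>i\<le>j. cc n j i * Bc n l i) = 0" by (intro sum.neutral) (auto simp: Bc_def)
        then show ?thesis using False by simp
      qed
    qed
    also have "\<dots> = bb n (int j)" using True by (simp add: if_distrib cong: if_cong)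
    finally show ?thesis using kj by (simp add: a_def)
  qed
qed

theorem theorem4p2:
  fixes n :: nat and k :: int
  assumes "n \<ge> 3" and "k \<ge> 0"
  shows "of_nat n * a n k =
      of_int (k + 1) * a (n - 1) k
    + of_int (2 * int n - 4 * k) * a (n - 1) (k - 1)
    + of_int (k * (k + 2) + int n - 1) * a (n - 2) k
    + of_int ((k - 1) * (4 * int n - 8 * k - 14) + 2 * int n - 8) * a (n - 2) (k - 1)
    + of_int (4 * (int n - 2 * k) * (int n - 2 * k + 1)) * a (n - 2) (k - 2)"
proof -
  have n1: "n \<ge> 1" "n - 1 \<ge> 1" "n - 2 \<ge> 1" using assms(1) by auto
  have "of_nat n * a n k = rhs n k bb"
    using bb_rec[OF assms] a_eq_bb[OF n1(1)] by simp
  also have "\<dots> = rhs n k a"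
    unfolding rhs_def using a_eq_bb[OF n1(2)] a_eq_bb[OF n1(3)] by simp
  finally show ?thesis unfolding rhs_def .
qed

end
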